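(* Suppose Assumptions RA and MON hold and $\mathbb E[D\mid Z=1]-\mathbb E[D\mid Z=0]>0$. Then $p_c=\mathbb E[D\mid Z=1]-\mathbb E[D\mid Z=0]$, $p_a=\mathbb E[D\mid Z=0]$, $p_n=\mathbb E[1-D\mid Z=1]$, $p_{df}=0$; for all $y$, $$F_{11a}^{LB}(y)\equiv\max\Big\{\tfrac{\mathbb P(Y\le y,D=1\mid Z=1)-p_c}{p_a},0\Big\}\le F_{11a}(y)\le\min\Big\{\tfrac{\mathbb P(Y\le y,D=1\mid Z=1)}{p_a},1\Big\}\equiv F_{11a}^{UB}(y),$$ $$F_{00n}^{LB}(y)\equiv\max\Big\{\tfrac{\mathbb P(Y\le y,D=0\mid Z=0)-p_c}{p_n},0\Big\}\le F_{00n}(y)\le\min\Big\{\tfrac{\mathbb P(Y\le y,D=0\mid Z=0)}{p_n},1\Big\}\equiv F_{00n}^{UB}(y),$$ $F_{11c}(y)=\frac{\mathbb P(Y\le y,D=1\mid Z=1)-p_aF_{11a}(y)}{p_c}$, $F_{00c}(y)=\frac{\mathbb P(Y\le y,D=0\mid Z=0)-p_nF_{00n}(y)}{p_c}$, $F_{10a}(y)=\mathbb P(Y\le y\mid D=1,Z=0)$, $F_{01n}(y)=\mathbb P(Y\le y\mid D=0,Z=1)$. These bounds are pointwise sharp.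
   Context: Setup: binary instrument $Z$ ($0<\mathbb P(Z=1)<1$), binary treatment $D$, real outcome $Y$; potential treatments $D_0,D_1$ and potential outcomes $Y_{dz}$ ($d,z\in\{0,1\}$), with $D=D_1Z+D_0(1-Z)$, $Y=(Y_{11}Z+Y_{10}(1-Z))D+(Y_{01}Z+Y_{00}(1-Z))(1-D)$. Types $T=(D_0,D_1)$: $a=(1,1)$, $n=(0,0)$, $c=(0,1)$, $df=(1,0)$, $p_t=\mathbb P(T=t)$. RA: $Z$ independent of $(Y_{11},Y_{10},Y_{01},Y_{00},D_1,D_0)$. MON: either $D_1\ge D_0$ a.s. or $D_0\ge D_1$ a.s. (The exclusion restriction is not assumed.) $F_{dzt}(y)\equiv\mathbb P(Y_{dz}\le y\mid T=t)$. Pointwise sharp: for each $y$, every value in the stated interval is attained for some latent distribution satisfying RA and MON and consistent with the observed distribution of $(Y,D,Z)$. *)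

theory Defs
  imports "HOL-Probability.Probability"
begin

text \<open>Latent outcome: (Z, (Y11, Y10, Y01, Y00), D0, D1).
  A latent distribution is a probability measure on this space.\<close>

type_synonym latent = "bool \<times> (real \<times> real \<times> real \<times> real) \<times> bool \<times> bool"

definition restM :: "((real \<times> real \<times> real \<times> real) \<times> bool \<times> bool) measure" where
  "restM = (borel :: (real \<times> real \<times> real \<times> real) measure)
             \<Otimes>\<^sub>M (count_space UNIV \<Otimes>\<^sub>M count_space UNIV)"

definition latM :: "latent measure" where
  "latM = count_space UNIV \<Otimes>\<^sub>M restM"

definition Zv :: "latent \<Rightarrow> bool" where "Zv w = fst w"
definition D0v :: "latent \<Rightarrow> bool" where "D0v w = fst (snd (snd w))"
definition D1v :: "latent \<Rightarrow> bool" where "D1v w = snd (snd (snd w))"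

definition Yp :: "bool \<Rightarrow> bool \<Rightarrow> latent \<Rightarrow> real" where
  "Yp d z w = (case fst (snd w) of (y11, y10, y01, y00) \<Rightarrow>
      (if d then (if z then y11 else y10) else (if z then y01 else y00)))"

definition Dv :: "latent \<Rightarrow> bool" where "Dv w = (if Zv w then D1v w else D0v w)"
definition Yv :: "latent \<Rightarrow> real" where "Yv w = Yp (Dv w) (Zv w) w"

datatype ctype = TA | TN | TC | TDF

definition ctype_of :: "latent \<Rightarrow> ctype" where
  "ctype_of w = (case (D0v w, D1v w) of
      (True, True) \<Rightarrow> TA | (False, False) \<Rightarrow> TN | (False, True) \<Rightarrow> TC | (True, False) \<Rightarrow> TDF)"

definition pr :: "latent measure \<Rightarrow> (latent \<Rightarrow> bool) \<Rightarrow> real" where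
  "pr P A = measure P {w \<in> space P. A w}"

definition cpr :: "latent measure \<Rightarrow> (latent \<Rightarrow> bool) \<Rightarrow> (latent \<Rightarrow> bool) \<Rightarrow> real" where
  "cpr P A B = pr P (\<lambda>w. A w \<and> B w) / pr P B"

definition ptype :: "latent measure \<Rightarrow> ctype \<Rightarrow> real" where
  "ptype P t = pr P (\<lambda>w. ctype_of w = t)"

definition Fdzt :: "latent measure \<Rightarrow> bool \<Rightarrow> bool \<Rightarrow> ctype \<Rightarrow> real \<Rightarrow> real" where
  "Fdzt P d z t y = cpr P (\<lambda>w. Yp d z w \<le> y) (\<lambda>w. ctype_of w = t)"

definition RA :: "latent measure \<Rightarrow> bool" where
  "RA P = (fst \<in> measurable P (count_space UNIV) \<and> snd \<in> measurable P restM \<and>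
     prob_space.indep_set P
       (sigma_sets (space P) {fst -` A \<inter> space P | A. A \<in> sets (count_space UNIV)})
       (sigma_sets (space P) {snd -` A \<inter> space P | A. A \<in> sets restM}))"

definition MON :: "latent measure \<Rightarrow> bool" where
  "MON P = ((AE w in P. D0v w \<le> D1v w) \<or> (AE w in P. D1v w \<le> D0v w))"

definition latent_dist :: "latent measure \<Rightarrow> bool" where
  "latent_dist P = (sets P = sets latM \<and> prob_space P \<and> 0 < pr P Zv \<and> pr P Zv < 1)"

definition obsM :: "(real \<times> bool \<times> bool) measure" where
  "obsM = (borel :: real measure) \<Otimes>\<^sub>M (count_space UNIV \<Otimes>\<^sub>M count_space UNIV)"

definition obs :: "latent \<Rightarrow> real \<times> bool \<times> bool" where
  "obs w = (Yv w, Dv w, Zv w)"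

definition same_obs :: "latent measure \<Rightarrow> latent measure \<Rightarrow> bool" where
  "same_obs P Q = (distr P obsM obs = distr Q obsM obs)"

definition F11a_LB :: "latent measure \<Rightarrow> real \<Rightarrow> real" where
  "F11a_LB P y = max ((cpr P (\<lambda>w. Yv w \<le> y \<and> Dv w) Zv - ptype P TC) / ptype P TA) 0"
definition F11a_UB :: "latent measure \<Rightarrow> real \<Rightarrow> real" where
  "F11a_UB P y = min (cpr P (\<lambda>w. Yv w \<le> y \<and> Dv w) Zv / ptype P TA) 1"
definition F00n_LB :: "latent measure \<Rightarrow> real \<Rightarrow> real" where
  "F00n_LB P y = max ((cpr P (\<lambda>w. Yv w \<le> y \<and> \<not> Dv w) (\<lambda>w. \<not> Zv w) - ptype P TC) / ptype P TN) 0"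
definition F00n_UB :: "latent measure \<Rightarrow> real \<Rightarrow> real" where
  "F00n_UB P y = min (cpr P (\<lambda>w. Yv w \<le> y \<and> \<not> Dv w) (\<lambda>w. \<not> Zv w) / ptype P TN) 1"

end

theory Submission
  imports Defs
begin


type_synonym rest = "(real\<times>real\<times>real\<times>real)\<times>bool\<times>bool"

definition ry :: "bool \<Rightarrow> bool \<Rightarrow> rest \<Rightarrow> real" where
 "ry d z r = (if d then (if z then fst (fst r) else fst (snd (fst r))) else (if z then fst (snd (snd (fst r))) else snd (snd (snd (fst r)))))"
definition d0 :: "rest \<Rightarrow> bool" where "d0 r = fst (snd r)"
definition d1 :: "rest \<Rightarrow> bool" where "d1 r = snd (snd r)"

lemma c1: "(\<lambda>x::real\<times>real\<times>real\<times>real. fst x) \<in> borel_measurable borel"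
  "(\<lambda>x::real\<times>real\<times>real\<times>real. fst (snd x)) \<in> borel_measurable borel"
  "(\<lambda>x::real\<times>real\<times>real\<times>real. fst (snd (snd x))) \<in> borel_measurable borel"
  "(\<lambda>x::real\<times>real\<times>real\<times>real. snd (snd (snd x))) \<in> borel_measurable borel"
  by (intro borel_measurable_continuous_onI continuous_intros)+

lemma ry_meas[measurable]: "ry d z \<in> borel_measurable restM"
proof -
  have f: "fst \<in> restM \<rightarrow>\<^sub>M (borel :: (real\<times>real\<times>real\<times>real) measure)" unfolding restM_def by measurable
  show ?thesis unfolding ry_def
    by (cases d; cases z; simp; rule measurable_compose[OF f]; simp add: c1)
qed
lemma d_meas[measurable]: "d0 \<in> restM \<rightarrow>\<^sub>M count_space UNIV" "d1 \<in> restM \<rightarrow>\<^sub>M count_space UNIV"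
  unfolding restM_def d0_def d1_def by measurable

lemma space_restM[simp]: "space restM = UNIV" by (simp add: restM_def space_pair_measure)
lemma space_latM[simp]: "space latM = UNIV" by (simp add: latM_def restM_def space_pair_measure)

lemma Yp_eq: "Yp d z w = ry d z (snd w)" by (simp add: Yp_def ry_def split: prod.split)
lemma D0v_eq: "D0v w = d0 (snd w)" by (simp add: D0v_def d0_def)
lemma D1v_eq: "D1v w = d1 (snd w)" by (simp add: D1v_def d1_def)
lemma ctype_TA: "(ctype_of w = TA) = (d0 (snd w) \<and> d1 (snd w))"
  and ctype_TN: "(ctype_of w = TN) = (\<not> d0 (snd w) \<and> \<not> d1 (snd w))"
  and ctype_TC: "(ctype_of w = TC) = (\<not> d0 (snd w) \<and> d1 (snd w))"
  and ctype_TDF: "(ctype_of w = TDF) = (d0 (snd w) \<and> \<not> d1 (snd w))"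
  by (auto simp: ctype_of_def D0v_eq[symmetric] D1v_eq[symmetric] split: bool.splits)

definition prodform :: "latent measure \<Rightarrow> bool measure \<Rightarrow> rest measure \<Rightarrow> bool" where
  "prodform M B R \<longleftrightarrow> prob_space B \<and> sets B = sets (count_space UNIV) \<and> prob_space R \<and>
     sets R = sets restM \<and> M = B \<Otimes>\<^sub>M R"

lemma prodform_P:
  assumes "latent_dist P" "RA P"
  shows "prodform P (distr P (count_space UNIV) fst) (distr P restM snd)"
proof -
  interpret prob_space P using assms(1) by (simp add: latent_dist_def)
  have m: "fst \<in> measurable P (count_space UNIV)" "snd \<in> measurable P restM" using assms(2) by (auto simp: RA_def)
  have ind: "indep_set (sigma_sets (space P) {fst -` A \<inter> space P | A. A \<in> sets (count_space UNIV)})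
       (sigma_sets (space P) {snd -` A \<inter> space P | A. A \<in> sets restM})" using assms(2) by (simp add: RA_def)
  have sp: "space P = UNIV" using assms(1) by (simp add: latent_dist_def sets_eq_imp_space_eq)
  have "distr P (count_space UNIV) fst \<Otimes>\<^sub>M distr P restM snd = P"
  proof (rule pair_measure_eqI)
    show "sigma_finite_measure (distr P (count_space UNIV) fst)"
      using m by (intro prob_space_imp_sigma_finite prob_space_distr) 
    show "sigma_finite_measure (distr P restM snd)"
      using m by (intro prob_space_imp_sigma_finite prob_space_distr) 
    show "sets (distr P (count_space UNIV) fst \<Otimes>\<^sub>M distr P restM snd) = sets P"
    proof -
      have "sets (distr P (count_space UNIV) fst \<Otimes>\<^sub>M distr P restM snd) = sets (count_space UNIV \<Otimes>\<^sub>M restM)"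
        by (rule sets_pair_measure_cong) simp_all
      then show ?thesis using assms(1) unfolding latent_dist_def latM_def by simp
    qed
    fix A S assume A: "A \<in> sets (distr P (count_space UNIV) fst)" and S: "S \<in> sets (distr P restM snd)"
    have S': "S \<in> sets restM" using S by simp
    have e: "A \<times> S = (fst -` A \<inter> space P) \<inter> (snd -` S \<inter> space P)" proof (rule set_eqI)
      fix x :: latent show "x \<in> A \<times> S \<longleftrightarrow> x \<in> (fst -` A \<inter> space P) \<inter> (snd -` S \<inter> space P)"
        by (cases x) (simp add: sp)
    qed
    have "prob ((fst -` A \<inter> space P) \<inter> (snd -` S \<inter> space P)) = prob (fst -` A \<inter> space P) * prob (snd -` S \<inter> space P)"
    proof (rule indep_setD[OF ind])
      show "fst -` A \<inter> space P \<in> sigma_sets (space P) {fst -` A \<inter> space P | A. A \<in> sets (count_space UNIV)}"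
        by (intro sigma_sets.Basic CollectI exI[of _ A]) simp
      show "snd -` S \<inter> space P \<in> sigma_sets (space P) {snd -` A \<inter> space P | A. A \<in> sets restM}"
        by (intro sigma_sets.Basic CollectI exI[of _ S]) (simp add: S')
    qed
    then show "emeasure (distr P (count_space UNIV) fst) A * emeasure (distr P restM snd) S = emeasure P (A \<times> S)"
    proof -
      have "emeasure (distr P (count_space UNIV) fst) A = prob (fst -` A \<inter> space P)"
        using m(1) A by (simp add: emeasure_distr emeasure_eq_measure)
      moreover have "emeasure (distr P restM snd) S = prob (snd -` S \<inter> space P)"
        using m(2) S' by (simp add: emeasure_distr emeasure_eq_measure)
      moreover have "emeasure P (A \<times> S) = prob ((fst -` A \<inter> space P) \<inter> (snd -` S \<inter> space P))"
        unfolding e by (simp add: emeasure_eq_measure)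
      ultimately show ?thesis using \<open>prob (_ \<inter> _) = _\<close> by (simp add: ennreal_mult')
    qed
  qed
  then show ?thesis unfolding prodform_def using m
    by (auto intro!: prob_space_distr)
qed

lemma prodform_space: "prodform M B R \<Longrightarrow> space M = UNIV"
proof -
  assume a: "prodform M B R"
  then have 1: "sets B = sets (count_space UNIV)" and 2: "sets R = sets restM" and 3: "M = B \<Otimes>\<^sub>M R"
    by (simp_all only: prodform_def)
  have "space B = space (count_space UNIV)" using 1 by (rule sets_eq_imp_space_eq)
  moreover have "space R = space restM" using 2 by (rule sets_eq_imp_space_eq)
  ultimately show ?thesis unfolding 3 space_pair_measure by simp
qed

lemma prodform_prob: "prodform M B R \<Longrightarrow> prob_space M"
  unfolding prodform_def by (auto intro: prob_space_pair)

definition mu :: "rest measure \<Rightarrow> (rest \<Rightarrow> bool) \<Rightarrow> real" where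
  "mu R A = measure R {r. A r}"

lemma prodform_Times:
  assumes "prodform M B R" "S \<in> sets restM"
  shows "measure M (X \<times> S) = measure B X * measure R S"
proof -
  interpret B: prob_space B using assms(1) by (simp add: prodform_def)
  interpret R: prob_space R using assms(1) by (simp add: prodform_def)
  interpret M: prob_space M using prodform_prob[OF assms(1)] .
  have sB: "X \<in> sets B" using assms(1) by (simp add: prodform_def)
  have sR: "S \<in> sets R" using assms by (simp add: prodform_def)
  have "emeasure M (X \<times> S) = emeasure B X * emeasure R S"
    using assms(1) sB sR unfolding prodform_def
    by (simp add: R.sigma_finite_measure_axioms sigma_finite_measure.emeasure_pair_measure_Times)
  then show ?thesis
    by (simp add: B.emeasure_eq_measure R.emeasure_eq_measure M.emeasure_eq_measure ennreal_mult'[symmetric])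
qed

lemma pr_Zsnd:
  assumes "prodform M B R" "Measurable.pred restM A"
  shows "pr M (\<lambda>w. Zv w = z \<and> A (snd w)) = measure B {z} * mu R A"
proof -
  have s: "{r. A r} \<in> sets restM" using assms(2) unfolding pred_def by simp
  have "{w \<in> space M. Zv w = z \<and> A (snd w)} = {z} \<times> {r. A r}"
    unfolding prodform_space[OF assms(1)] by (rule set_eqI) (auto simp: Zv_def)
  then show ?thesis unfolding pr_def mu_def using prodform_Times[OF assms(1) s] by simp
qed

lemma pr_snd:
  assumes "prodform M B R" "Measurable.pred restM A"
  shows "pr M (\<lambda>w. A (snd w)) = mu R A"
proof -
  have s: "{r. A r} \<in> sets restM" using assms(2) unfolding pred_def by simp
  interpret B: prob_space B using assms(1) by (simp add: prodform_def)
  have sB: "space B = UNIV" using sets_eq_imp_space_eq[of B "count_space UNIV"] assms(1) unfolding prodform_def by simp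
  have "{w \<in> space M. A (snd w)} = UNIV \<times> {r. A r}"
    unfolding prodform_space[OF assms(1)] by (rule set_eqI) auto
  then show ?thesis unfolding pr_def mu_def
    using prodform_Times[OF assms(1) s, of UNIV] B.prob_space sB by simp
qed

lemma prodform_sets: "prodform M B R \<Longrightarrow> sets M = sets latM"
  unfolding prodform_def latM_def by (metis sets_pair_measure_cong)

lemma pB_compl:
  assumes "prodform M B R" shows "measure B {False} = 1 - measure B {True}"
proof -
  interpret B: prob_space B using assms(1) by (simp add: prodform_def)
  have sB: "space B = UNIV" using sets_eq_imp_space_eq[of B "count_space UNIV"] assms(1) unfolding prodform_def by simp
  have "{True} \<in> B.events" using assms(1) by (simp add: prodform_def)
  then have "measure B (space B - {True}) = 1 - measure B {True}" by (rule B.prob_compl)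
  moreover have "space B - {True} = {False}" unfolding sB by auto
  ultimately show ?thesis by simp
qed

lemma mu_true: "prodform M B R \<Longrightarrow> mu R (\<lambda>_. True) = 1"
proof -
  assume a: "prodform M B R"
  interpret R: prob_space R using a by (simp add: prodform_def)
  have "space R = UNIV" using sets_eq_imp_space_eq[of R restM] a unfolding prodform_def by simp
  then show ?thesis unfolding mu_def using R.prob_space by simp
qed

lemma prZ: "prodform M B R \<Longrightarrow> pr M Zv = measure B {True}"
proof -
  assume a: "prodform M B R"
  have "pr M Zv = pr M (\<lambda>w. Zv w = True \<and> (\<lambda>_. True) (snd w))" by simp
  also have "\<dots> = measure B {True}" using pr_Zsnd[OF a, of "\<lambda>_. True" True] mu_true[OF a] by simp
  finally show ?thesis .
qed

lemma cpr_gen: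
  assumes a: "prodform M B R" and pos: "measure B {z} > 0"
    and G: "Measurable.pred restM G" and H: "Measurable.pred restM H"
    and FG: "\<And>w. Zv w = z \<Longrightarrow> F w = G (snd w)" and CH: "\<And>w. C w = (Zv w = z \<and> H (snd w))"
  shows "cpr M F C = mu R (\<lambda>r. G r \<and> H r) / mu R H"
proof -
  have 1: "(\<lambda>w. F w \<and> C w) = (\<lambda>w. Zv w = z \<and> (\<lambda>r. G r \<and> H r) (snd w))" using FG CH by auto
  have 2: "C = (\<lambda>w. Zv w = z \<and> H (snd w))" using CH by auto
  have GH: "Measurable.pred restM (\<lambda>r. G r \<and> H r)" by (intro pred_intros_logic G H)
  have e1: "pr M (\<lambda>w. F w \<and> C w) = measure B {z} * mu R (\<lambda>r. G r \<and> H r)"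
    unfolding 1 by (rule pr_Zsnd[OF a GH])
  have e2: "pr M C = measure B {z} * mu R H" unfolding 2 by (rule pr_Zsnd[OF a H])
  show ?thesis unfolding cpr_def e1 e2 using pos by simp
qed

lemma mu_split:
  assumes a: "prodform M B R" and "Measurable.pred restM A" "Measurable.pred restM C"
  shows "mu R A = mu R (\<lambda>r. A r \<and> C r) + mu R (\<lambda>r. A r \<and> \<not> C r)"
proof -
  interpret R: prob_space R using a by (simp add: prodform_def)
  have sR: "sets R = sets restM" using a by (simp add: prodform_def)
  have "Measurable.pred restM (\<lambda>r. A r \<and> C r)" by (intro pred_intros_logic assms(2,3))
  then have s1: "{r. A r \<and> C r} \<in> sets R" unfolding sR pred_def by simp
  have "Measurable.pred restM (\<lambda>r. A r \<and> \<not> C r)" by (intro pred_intros_logic assms(2,3))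
  then have s2: "{r. A r \<and> \<not> C r} \<in> sets R" unfolding sR pred_def by simp
  have "{r. A r} = {r. A r \<and> C r} \<union> {r. A r \<and> \<not> C r}" by auto
  then show ?thesis unfolding mu_def using R.finite_measure_Union[OF s1 s2] by auto
qed

lemma mu_nonneg: "mu R A \<ge> 0" unfolding mu_def by simp

lemma mu_le1: "prodform M B R \<Longrightarrow> mu R A \<le> 1"
proof -
  assume a: "prodform M B R"
  interpret R: prob_space R using a by (simp add: prodform_def)
  show ?thesis unfolding mu_def by (rule R.prob_le_1)
qed

lemma mu_cong: "(\<And>r. A r = A' r) \<Longrightarrow> mu R A = mu R A'"
  unfolding mu_def by presburger

lemma mu_mono:
  assumes a: "prodform M B R" and "Measurable.pred restM A" "Measurable.pred restM C"
  shows "mu R (\<lambda>r. A r \<and> C r) \<le> mu R C"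
proof -
  have "mu R C = mu R (\<lambda>r. C r \<and> A r) + mu R (\<lambda>r. C r \<and> \<not> A r)" by (rule mu_split[OF a assms(3,2)])
  moreover have "mu R (\<lambda>r. C r \<and> A r) = mu R (\<lambda>r. A r \<and> C r)" by (rule mu_cong) auto
  ultimately show ?thesis using mu_nonneg[of R "\<lambda>r. C r \<and> \<not> A r"] by linarith
qed

fun tp :: "ctype \<Rightarrow> rest \<Rightarrow> bool" where
  "tp TA r = (d0 r \<and> d1 r)"
| "tp TN r = (\<not> d0 r \<and> \<not> d1 r)"
| "tp TC r = (\<not> d0 r \<and> d1 r)"
| "tp TDF r = (d0 r \<and> \<not> d1 r)"

lemma tp_eq: "tp TA = (\<lambda>r. d0 r \<and> d1 r)" "tp TN = (\<lambda>r. \<not> d0 r \<and> \<not> d1 r)"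
  "tp TC = (\<lambda>r. \<not> d0 r \<and> d1 r)" "tp TDF = (\<lambda>r. d0 r \<and> \<not> d1 r)"
  by (auto simp: fun_eq_iff)

lemma tp_meas[measurable]: "Measurable.pred restM (tp t)"
  by (cases t) (simp_all only: tp_eq; measurable)+

lemma ctype_tp: "(ctype_of w = t) = tp t (snd w)"
  by (cases t) (simp_all add: ctype_TA ctype_TN ctype_TC ctype_TDF)

lemma ptype_mu: "prodform M B R \<Longrightarrow> ptype M t = mu R (tp t)"
  unfolding ptype_def ctype_tp by (rule pr_snd) simp_all

lemma Fdzt_mu: "prodform M B R \<Longrightarrow> Fdzt M d z t y = mu R (\<lambda>r. ry d z r \<le> y \<and> tp t r) / mu R (tp t)"
proof -
  assume a: "prodform M B R"
  have 1: "pr M (\<lambda>w. Yp d z w \<le> y \<and> ctype_of w = t) = mu R (\<lambda>r. ry d z r \<le> y \<and> tp t r)"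
    unfolding ctype_tp Yp_eq by (rule pr_snd[OF a, of "\<lambda>r. ry d z r \<le> y \<and> tp t r"]) simp
  have 2: "pr M (\<lambda>w. ctype_of w = t) = mu R (tp t)"
    unfolding ctype_tp by (rule pr_snd[OF a]) simp
  show ?thesis unfolding Fdzt_def cpr_def 1 2 ..
qed

lemma Dv_Z: "Zv w \<Longrightarrow> Dv w = d1 (snd w)" by (simp add: Dv_def D1v_eq)
lemma Dv_nZ: "\<not> Zv w \<Longrightarrow> Dv w = d0 (snd w)" by (simp add: Dv_def D0v_eq)
lemma Yv_Z: "Zv w \<Longrightarrow> Yv w = ry (d1 (snd w)) True (snd w)" by (simp add: Yv_def Dv_Z Yp_eq)
lemma Yv_nZ: "\<not> Zv w \<Longrightarrow> Yv w = ry (d0 (snd w)) False (snd w)" by (simp add: Yv_def Dv_nZ Yp_eq)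

lemma pos_nZ: "prodform M B R \<Longrightarrow> pr M Zv < 1 \<Longrightarrow> measure B {False} > 0"
  using pB_compl prZ by fastforce
lemma pos_Z: "prodform M B R \<Longrightarrow> pr M Zv > 0 \<Longrightarrow> measure B {True} > 0"
  using prZ by fastforce

lemma obs_mu:
  assumes a: "prodform M B R" and z0: "0 < pr M Zv" and z1: "pr M Zv < 1"
  shows "cpr M Dv Zv = mu R d1"
    and "cpr M Dv (\<lambda>w. \<not> Zv w) = mu R d0"
    and "cpr M (\<lambda>w. \<not> Dv w) Zv = mu R (\<lambda>r. \<not> d1 r)"
    and "cpr M (\<lambda>w. Yv w \<le> y \<and> Dv w) Zv = mu R (\<lambda>r. ry True True r \<le> y \<and> d1 r)"
    and "cpr M (\<lambda>w. Yv w \<le> y \<and> \<not> Dv w) (\<lambda>w. \<not> Zv w) = mu R (\<lambda>r. ry False False r \<le> y \<and> \<not> d0 r)"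
    and "cpr M (\<lambda>w. Yv w \<le> y) (\<lambda>w. Dv w \<and> \<not> Zv w) = mu R (\<lambda>r. ry True False r \<le> y \<and> d0 r) / mu R d0"
    and "cpr M (\<lambda>w. Yv w \<le> y) (\<lambda>w. \<not> Dv w \<and> Zv w) = mu R (\<lambda>r. ry False True r \<le> y \<and> \<not> d1 r) / mu R (\<lambda>r. \<not> d1 r)"
proof -
  have pT: "measure B {True} > 0" using pos_Z[OF a z0] .
  have pF: "measure B {False} > 0" using pos_nZ[OF a z1] .
  have t1: "mu R (\<lambda>r. G r \<and> True) / mu R (\<lambda>_. True) = mu R G" for G
    using mu_true[OF a] by (simp add: mu_def)
  have "cpr M Dv Zv = mu R (\<lambda>r. d1 r \<and> True) / mu R (\<lambda>_. True)"
    apply (rule cpr_gen[OF a pT])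
    apply measurable
    apply measurable
    apply (auto simp add: Dv_Z)
    done
  then show "cpr M Dv Zv = mu R d1" unfolding t1 .
  have "cpr M Dv (\<lambda>w. \<not> Zv w) = mu R (\<lambda>r. d0 r \<and> True) / mu R (\<lambda>_. True)"
    apply (rule cpr_gen[OF a pF])
    apply measurable
    apply measurable
    apply (auto simp add: Dv_nZ)
    done
  then show "cpr M Dv (\<lambda>w. \<not> Zv w) = mu R d0" unfolding t1 .
  have "cpr M (\<lambda>w. \<not> Dv w) Zv = mu R (\<lambda>r. \<not> d1 r \<and> True) / mu R (\<lambda>_. True)"
    apply (rule cpr_gen[OF a pT])
    apply measurable
    apply measurable
    apply (auto simp add: Dv_Z)
    done
  then show "cpr M (\<lambda>w. \<not> Dv w) Zv = mu R (\<lambda>r. \<not> d1 r)" unfolding t1 .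
  have "cpr M (\<lambda>w. Yv w \<le> y \<and> Dv w) Zv = mu R (\<lambda>r. (ry True True r \<le> y \<and> d1 r) \<and> True) / mu R (\<lambda>_. True)"
    apply (rule cpr_gen[OF a pT])
    apply measurable
    apply measurable
    apply (auto simp add: Dv_Z Yv_Z)
    done
  then show "cpr M (\<lambda>w. Yv w \<le> y \<and> Dv w) Zv = mu R (\<lambda>r. ry True True r \<le> y \<and> d1 r)" unfolding t1 .
  have "cpr M (\<lambda>w. Yv w \<le> y \<and> \<not> Dv w) (\<lambda>w. \<not> Zv w) = mu R (\<lambda>r. (ry False False r \<le> y \<and> \<not> d0 r) \<and> True) / mu R (\<lambda>_. True)"
    apply (rule cpr_gen[OF a pF])
    apply measurable
    apply measurable
    apply (auto simp add: Dv_nZ Yv_nZ)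
    done
  then show "cpr M (\<lambda>w. Yv w \<le> y \<and> \<not> Dv w) (\<lambda>w. \<not> Zv w) = mu R (\<lambda>r. ry False False r \<le> y \<and> \<not> d0 r)" unfolding t1 .
  have "cpr M (\<lambda>w. Yv w \<le> y) (\<lambda>w. Dv w \<and> \<not> Zv w) = mu R (\<lambda>r. ry (d0 r) False r \<le> y \<and> d0 r) / mu R d0"
    apply (rule cpr_gen[OF a pF])
    apply measurable
    apply measurable
    apply (auto simp add: Dv_nZ Yv_nZ)
    done
  moreover have "mu R (\<lambda>r. ry (d0 r) False r \<le> y \<and> d0 r) = mu R (\<lambda>r. ry True False r \<le> y \<and> d0 r)"
    by (rule mu_cong) auto
  ultimately show "cpr M (\<lambda>w. Yv w \<le> y) (\<lambda>w. Dv w \<and> \<not> Zv w) = mu R (\<lambda>r. ry True False r \<le> y \<and> d0 r) / mu R d0" by simp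
  have "cpr M (\<lambda>w. Yv w \<le> y) (\<lambda>w. \<not> Dv w \<and> Zv w) = mu R (\<lambda>r. ry (d1 r) True r \<le> y \<and> \<not> d1 r) / mu R (\<lambda>r. \<not> d1 r)"
    apply (rule cpr_gen[OF a pT])
    apply measurable
    apply measurable
    apply (auto simp add: Dv_Z Yv_Z)
    done
  moreover have "mu R (\<lambda>r. ry (d1 r) True r \<le> y \<and> \<not> d1 r) = mu R (\<lambda>r. ry False True r \<le> y \<and> \<not> d1 r)"
    by (rule mu_cong) auto
  ultimately show "cpr M (\<lambda>w. Yv w \<le> y) (\<lambda>w. \<not> Dv w \<and> Zv w) = mu R (\<lambda>r. ry False True r \<le> y \<and> \<not> d1 r) / mu R (\<lambda>r. \<not> d1 r)" by simp
qed

lemma AE_mu: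
  assumes a: "prodform M B R" and A: "Measurable.pred restM A"
  shows "(AE w in M. \<not> A (snd w)) \<longleftrightarrow> mu R A = 0"
proof -
  interpret M: prob_space M using prodform_prob[OF a] .
  have sM: "sets M = sets latM" by (rule prodform_sets[OF a])
  have "Measurable.pred latM (\<lambda>w. A (snd w))" unfolding latM_def using A by measurable
  then have N: "{w \<in> space M. A (snd w)} \<in> sets M" unfolding sM pred_def
    using prodform_space[OF a] by simp
  have "(AE w in M. \<not> A (snd w)) \<longleftrightarrow> emeasure M {w \<in> space M. A (snd w)} = 0"
    by (rule AE_iff_measurable[OF N]) simp
  also have "\<dots> \<longleftrightarrow> pr M (\<lambda>w. A (snd w)) = 0"
    unfolding pr_def M.emeasure_eq_measure by simp
  also have "\<dots> \<longleftrightarrow> mu R A = 0" using pr_snd[OF a A] by simp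
  finally show ?thesis .
qed

lemma MON_mu:
  assumes a: "prodform M B R"
  shows "MON M \<longleftrightarrow> (mu R (\<lambda>r. d0 r \<and> \<not> d1 r) = 0 \<or> mu R (\<lambda>r. d1 r \<and> \<not> d0 r) = 0)"
proof -
  have 1: "(D0v w \<le> D1v w) = (\<not> (\<lambda>r. d0 r \<and> \<not> d1 r) (snd w))" for w by (auto simp: D0v_eq D1v_eq)
  have 2: "(D1v w \<le> D0v w) = (\<not> (\<lambda>r. d1 r \<and> \<not> d0 r) (snd w))" for w by (auto simp: D0v_eq D1v_eq)
  show ?thesis unfolding MON_def 1 2
    by (simp only: AE_mu[OF a, of "\<lambda>r. d0 r \<and> \<not> d1 r"] AE_mu[OF a, of "\<lambda>r. d1 r \<and> \<not> d0 r"] pred_intros_logic d_meas)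
qed

lemma bnd:
  fixes m qa qc pa pc :: real
  assumes "m = qa + qc" "0 \<le> qa" "qa \<le> pa" "0 \<le> qc" "qc \<le> pc"
  shows "max ((m - pc) / pa) 0 \<le> qa / pa" "qa / pa \<le> min (m / pa) 1"
    "pc > 0 \<Longrightarrow> qc / pc = (m - pa * (qa / pa)) / pc"
proof -
  show "max ((m - pc) / pa) 0 \<le> qa / pa"
  proof (cases "pa = 0")
    case False then have "pa > 0" using assms by linarith
    then show ?thesis using assms by (auto simp: divide_right_mono)
  qed (use assms in simp)
  show "qa / pa \<le> min (m / pa) 1"
  proof (cases "pa = 0")
    case False then have "pa > 0" using assms by linarith
    then show ?thesis using assms by (auto simp: divide_right_mono)
  qed (use assms in simp)
  show "pc > 0 \<Longrightarrow> qc / pc = (m - pa * (qa / pa)) / pc"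
  proof (cases "pa = 0")
    case True then have "qa = 0" using assms by linarith
    then show ?thesis using assms True by simp
  qed (use assms in simp)
qed

lemma part1:
  assumes a: "prodform M B R" and z0: "0 < pr M Zv" and z1: "pr M Zv < 1" and mon: "MON M"
    and h: "cpr M Dv Zv - cpr M Dv (\<lambda>w. \<not> Zv w) > 0"
  shows "ptype M TC = cpr M Dv Zv - cpr M Dv (\<lambda>w. \<not> Zv w)
    \<and> ptype M TA = cpr M Dv (\<lambda>w. \<not> Zv w)
    \<and> ptype M TN = cpr M (\<lambda>w. \<not> Dv w) Zv
    \<and> ptype M TDF = 0
    \<and> (\<forall>y. F11a_LB M y \<le> Fdzt M True True TA y \<and> Fdzt M True True TA y \<le> F11a_UB M y)
    \<and> (\<forall>y. F00n_LB M y \<le> Fdzt M False False TN y \<and> Fdzt M False False TN y \<le> F00n_UB M y)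
    \<and> (\<forall>y. Fdzt M True True TC y =
          (cpr M (\<lambda>w. Yv w \<le> y \<and> Dv w) Zv - ptype M TA * Fdzt M True True TA y) / ptype M TC)
    \<and> (\<forall>y. Fdzt M False False TC y =
          (cpr M (\<lambda>w. Yv w \<le> y \<and> \<not> Dv w) (\<lambda>w. \<not> Zv w) - ptype M TN * Fdzt M False False TN y)
            / ptype M TC)
    \<and> (\<forall>y. Fdzt M True False TA y = cpr M (\<lambda>w. Yv w \<le> y) (\<lambda>w. Dv w \<and> \<not> Zv w))
    \<and> (\<forall>y. Fdzt M False True TN y = cpr M (\<lambda>w. Yv w \<le> y) (\<lambda>w. \<not> Dv w \<and> Zv w))"
proof -
  note o = obs_mu[OF a z0 z1]
  note pt = ptype_mu[OF a]
  note fd = Fdzt_mu[OF a]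
  have h': "mu R d1 - mu R d0 > 0" using h o by simp
  have mon': "mu R (\<lambda>r. d0 r \<and> \<not> d1 r) = 0 \<or> mu R (\<lambda>r. d1 r \<and> \<not> d0 r) = 0"
    using mon MON_mu[OF a] by simp
  have s1: "mu R d1 = mu R (\<lambda>r. d1 r \<and> d0 r) + mu R (\<lambda>r. d1 r \<and> \<not> d0 r)"
    by (rule mu_split[OF a]) measurable
  have s0: "mu R d0 = mu R (\<lambda>r. d0 r \<and> d1 r) + mu R (\<lambda>r. d0 r \<and> \<not> d1 r)"
    by (rule mu_split[OF a]) measurable
  have c10: "mu R (\<lambda>r. d1 r \<and> d0 r) = mu R (\<lambda>r. d0 r \<and> d1 r)" by (rule mu_cong) auto
  have f0: "mu R (\<lambda>r. d0 r \<and> \<not> d1 r) = 0"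
  proof (rule ccontr)
    assume "mu R (\<lambda>r. d0 r \<and> \<not> d1 r) \<noteq> 0"
    then have "mu R (\<lambda>r. d1 r \<and> \<not> d0 r) = 0" using mon' by simp
    then show False using s1 s0 c10 h' mu_nonneg[of R "\<lambda>r. d0 r \<and> \<not> d1 r"] by linarith
  qed
  have pa: "mu R (tp TA) = mu R d0" using s0 f0 by (simp add: tp_eq)
  have pdf: "mu R (tp TDF) = 0" using f0 by (simp add: tp_eq)
  have "mu R (tp TC) = mu R (\<lambda>r. d1 r \<and> \<not> d0 r)" unfolding tp_eq by (rule mu_cong) auto
  then have pc: "mu R (tp TC) = mu R d1 - mu R d0" using s1 s0 c10 f0 by linarith
  have sn: "mu R (\<lambda>r. \<not> d1 r) = mu R (\<lambda>r. \<not> d1 r \<and> \<not> d0 r) + mu R (\<lambda>r. \<not> d1 r \<and> \<not> \<not> d0 r)"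
    by (rule mu_split[OF a]) measurable
  have "mu R (\<lambda>r. \<not> d1 r \<and> \<not> \<not> d0 r) = mu R (\<lambda>r. d0 r \<and> \<not> d1 r)" by (rule mu_cong) auto
  moreover have "mu R (\<lambda>r. \<not> d1 r \<and> \<not> d0 r) = mu R (tp TN)" unfolding tp_eq by (rule mu_cong) auto
  ultimately have pn: "mu R (tp TN) = mu R (\<lambda>r. \<not> d1 r)" using sn f0 by linarith
  have pcpos: "mu R (tp TC) > 0" using pc h' by linarith
  have null: "mu R (\<lambda>r. X r \<and> d0 r \<and> \<not> d1 r) = 0" if X: "Measurable.pred restM X" for X
  proof -
    have "mu R (\<lambda>r. X r \<and> (\<lambda>r. d0 r \<and> \<not> d1 r) r) \<le> mu R (\<lambda>r. d0 r \<and> \<not> d1 r)"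
      by (rule mu_mono[OF a X]) measurable
    then show ?thesis using f0 mu_nonneg[of R "\<lambda>r. X r \<and> d0 r \<and> \<not> d1 r"] by simp
  qed
  have B1: "F11a_LB M y \<le> Fdzt M True True TA y \<and> Fdzt M True True TA y \<le> F11a_UB M y
     \<and> Fdzt M True True TC y = (cpr M (\<lambda>w. Yv w \<le> y \<and> Dv w) Zv - ptype M TA * Fdzt M True True TA y) / ptype M TC" for y
  proof -
    let ?X = "\<lambda>r. ry True True r \<le> y"
    have m: "mu R (\<lambda>r. ?X r \<and> d1 r) = mu R (\<lambda>r. (?X r \<and> d1 r) \<and> d0 r) + mu R (\<lambda>r. (?X r \<and> d1 r) \<and> \<not> d0 r)"
      by (rule mu_split[OF a]) measurable
    have e1: "mu R (\<lambda>r. (?X r \<and> d1 r) \<and> d0 r) = mu R (\<lambda>r. ?X r \<and> tp TA r)" by (rule mu_cong) auto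
    have e2: "mu R (\<lambda>r. (?X r \<and> d1 r) \<and> \<not> d0 r) = mu R (\<lambda>r. ?X r \<and> tp TC r)" by (rule mu_cong) auto
    have l1: "mu R (\<lambda>r. ?X r \<and> tp TA r) \<le> mu R (tp TA)" by (rule mu_mono[OF a]) measurable
    have l2: "mu R (\<lambda>r. ?X r \<and> tp TC r) \<le> mu R (tp TC)" by (rule mu_mono[OF a]) measurable
    note b = bnd[OF m[unfolded e1 e2] mu_nonneg l1 mu_nonneg l2]
    show ?thesis unfolding F11a_LB_def F11a_UB_def o pt fd using b pcpos by simp
  qed
  have B0: "F00n_LB M y \<le> Fdzt M False False TN y \<and> Fdzt M False False TN y \<le> F00n_UB M y
     \<and> Fdzt M False False TC y = (cpr M (\<lambda>w. Yv w \<le> y \<and> \<not> Dv w) (\<lambda>w. \<not> Zv w) - ptype M TN * Fdzt M False False TN y) / ptype M TC" for y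
  proof -
    let ?X = "\<lambda>r. ry False False r \<le> y"
    have m: "mu R (\<lambda>r. ?X r \<and> \<not> d0 r) = mu R (\<lambda>r. (?X r \<and> \<not> d0 r) \<and> \<not> d1 r) + mu R (\<lambda>r. (?X r \<and> \<not> d0 r) \<and> \<not> \<not> d1 r)"
      by (rule mu_split[OF a]) measurable
    have e1: "mu R (\<lambda>r. (?X r \<and> \<not> d0 r) \<and> \<not> d1 r) = mu R (\<lambda>r. ?X r \<and> tp TN r)" by (rule mu_cong) auto
    have e2: "mu R (\<lambda>r. (?X r \<and> \<not> d0 r) \<and> \<not> \<not> d1 r) = mu R (\<lambda>r. ?X r \<and> tp TC r)" by (rule mu_cong) auto
    have l1: "mu R (\<lambda>r. ?X r \<and> tp TN r) \<le> mu R (tp TN)" by (rule mu_mono[OF a]) measurable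
    have l2: "mu R (\<lambda>r. ?X r \<and> tp TC r) \<le> mu R (tp TC)" by (rule mu_mono[OF a]) measurable
    note b = bnd[OF m[unfolded e1 e2] mu_nonneg l1 mu_nonneg l2]
    show ?thesis unfolding F00n_LB_def F00n_UB_def o pt fd using b pcpos by simp
  qed
  have C1: "Fdzt M True False TA y = cpr M (\<lambda>w. Yv w \<le> y) (\<lambda>w. Dv w \<and> \<not> Zv w)" for y
  proof -
    let ?X = "\<lambda>r. ry True False r \<le> y"
    have m: "mu R (\<lambda>r. ?X r \<and> d0 r) = mu R (\<lambda>r. (?X r \<and> d0 r) \<and> d1 r) + mu R (\<lambda>r. (?X r \<and> d0 r) \<and> \<not> d1 r)"
      by (rule mu_split[OF a]) measurable
    have e1: "mu R (\<lambda>r. (?X r \<and> d0 r) \<and> d1 r) = mu R (\<lambda>r. ?X r \<and> tp TA r)" by (rule mu_cong) auto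
    have e2: "mu R (\<lambda>r. (?X r \<and> d0 r) \<and> \<not> d1 r) = mu R (\<lambda>r. ?X r \<and> d0 r \<and> \<not> d1 r)" by (rule mu_cong) auto
    have "mu R (\<lambda>r. ?X r \<and> d0 r \<and> \<not> d1 r) = 0" by (rule null) measurable
    then show ?thesis unfolding o fd using m e1 e2 pa by simp
  qed
  have C0: "Fdzt M False True TN y = cpr M (\<lambda>w. Yv w \<le> y) (\<lambda>w. \<not> Dv w \<and> Zv w)" for y
  proof -
    let ?X = "\<lambda>r. ry False True r \<le> y"
    have m: "mu R (\<lambda>r. ?X r \<and> \<not> d1 r) = mu R (\<lambda>r. (?X r \<and> \<not> d1 r) \<and> \<not> d0 r) + mu R (\<lambda>r. (?X r \<and> \<not> d1 r) \<and> \<not> \<not> d0 r)"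
      by (rule mu_split[OF a]) measurable
    have e1: "mu R (\<lambda>r. (?X r \<and> \<not> d1 r) \<and> \<not> d0 r) = mu R (\<lambda>r. ?X r \<and> tp TN r)" by (rule mu_cong) auto
    have e2: "mu R (\<lambda>r. (?X r \<and> \<not> d1 r) \<and> \<not> \<not> d0 r) = mu R (\<lambda>r. ?X r \<and> d0 r \<and> \<not> d1 r)" by (rule mu_cong) auto
    have "mu R (\<lambda>r. ?X r \<and> d0 r \<and> \<not> d1 r) = 0" by (rule null) measurable
    then show ?thesis unfolding o fd using m e1 e2 pn by simp
  qed
  show ?thesis using B1 B0 C1 C0 pa pc pn pdf by (simp add: o pt)
qed



lemma borel4: "(borel :: (real\<times>real\<times>real\<times>real) measure) = borel \<Otimes>\<^sub>M (borel \<Otimes>\<^sub>M (borel \<Otimes>\<^sub>M borel))"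
  by (simp add: borel_prod)

lemma restM4: "restM = (borel \<Otimes>\<^sub>M (borel \<Otimes>\<^sub>M (borel \<Otimes>\<^sub>M borel))) \<Otimes>\<^sub>M (count_space UNIV \<Otimes>\<^sub>M count_space UNIV)"
  unfolding restM_def borel4 ..

definition fa :: "real \<times> real \<Rightarrow> rest" where "fa p = ((fst p, snd p, 0, 0), True, True)"
definition fc :: "real \<times> real \<Rightarrow> rest" where "fc p = ((fst p, 0, 0, snd p), False, True)"
definition fn :: "real \<times> real \<Rightarrow> rest" where "fn p = ((0, 0, fst p, snd p), False, False)"

lemma f_meas: "fa \<in> borel \<Otimes>\<^sub>M borel \<rightarrow>\<^sub>M restM" "fc \<in> borel \<Otimes>\<^sub>M borel \<rightarrow>\<^sub>M restM" "fn \<in> borel \<Otimes>\<^sub>M borel \<rightarrow>\<^sub>M restM"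
  unfolding restM4 fa_def fc_def fn_def by measurable

definition nu :: "rest measure \<Rightarrow> (rest \<Rightarrow> real) \<Rightarrow> (rest \<Rightarrow> bool) \<Rightarrow> real measure" where
  "nu R g H = distr (density R (indicator {r. H r})) borel g"

lemma sets_nu[simp]: "sets (nu R g H) = sets borel" by (simp add: nu_def)
lemma space_nu[simp]: "space (nu R g H) = UNIV" by (simp add: nu_def)

lemma emeasure_nu:
  assumes a: "prodform M B R" and g: "g \<in> borel_measurable restM" and H: "Measurable.pred restM H"
    and E: "E \<in> sets borel"
  shows "emeasure (nu R g H) E = ennreal (mu R (\<lambda>r. g r \<in> E \<and> H r))"
proof -
  interpret R: prob_space R using a by (simp add: prodform_def)
  have sR: "sets R = sets restM" using a by (simp add: prodform_def)
  have spR: "space R = UNIV" using sets_eq_imp_space_eq[OF sR] by simp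
  have g': "g \<in> borel_measurable R" using g measurable_cong_sets[OF sR refl] by blast
  have H': "{r. H r} \<in> sets R" using H unfolding sR pred_def by simp
  have Hi: "indicator {r. H r} \<in> borel_measurable R" using H' by simp
  have gE: "g -` E \<inter> space R \<in> sets R" using g' E by (rule measurable_sets)
  have "emeasure (nu R g H) E = emeasure (density R (indicator {r. H r})) (g -` E \<inter> space R)"
    unfolding nu_def using g' E by (subst emeasure_distr) auto
  also have "\<dots> = (\<integral>\<^sup>+ x. indicator {r. H r} x * indicator (g -` E \<inter> space R) x \<partial>R)"
    using Hi gE by (rule emeasure_density)
  also have "\<dots> = (\<integral>\<^sup>+ x. indicator {r. g r \<in> E \<and> H r} x \<partial>R)"
    by (rule nn_integral_cong) (auto simp: spR indicator_def)
  also have "\<dots> = emeasure R {r. g r \<in> E \<and> H r}"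
  proof (rule nn_integral_indicator)
    have "{r. g r \<in> E \<and> H r} = (g -` E \<inter> space R) \<inter> {r. H r}" by (auto simp: spR)
    then show "{r. g r \<in> E \<and> H r} \<in> sets R" using gE H' by simp
  qed
  finally show ?thesis by (simp add: R.emeasure_eq_measure mu_def)
qed

lemma finite_nu:
  assumes "prodform M B R" "g \<in> borel_measurable restM" "Measurable.pred restM H"
  shows "finite_measure (nu R g H)"
proof (rule finite_measureI)
  have "emeasure (nu R g H) UNIV = ennreal (mu R (\<lambda>r. g r \<in> UNIV \<and> H r))"
    by (rule emeasure_nu[OF assms]) simp
  then show "emeasure (nu R g H) (space (nu R g H)) \<noteq> \<infinity>" by simp
qed

lemma measure_nu:
  assumes "prodform M B R" "g \<in> borel_measurable restM" "Measurable.pred restM H" "E \<in> sets borel"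
  shows "measure (nu R g H) E = mu R (\<lambda>r. g r \<in> E \<and> H r)"
  using emeasure_nu[OF assms] by (simp add: measure_def mu_nonneg)

definition stp :: "real measure \<Rightarrow> real \<Rightarrow> real \<Rightarrow> real \<Rightarrow> real measure" where
  "stp \<nu> a b y = density \<nu> (\<lambda>x. ennreal (if x \<le> y then a else b))"

lemma sets_stp[simp]: "sets (stp \<nu> a b y) = sets \<nu>" by (simp add: stp_def)
lemma space_stp[simp]: "space (stp \<nu> a b y) = space \<nu>" by (simp add: stp_def)

lemma emeasure_stp:
  assumes s: "sets \<nu> = sets borel" and E: "E \<in> sets borel"
  shows "emeasure (stp \<nu> a b y) E = ennreal a * emeasure \<nu> (E \<inter> {..y}) + ennreal b * emeasure \<nu> (E \<inter> {y<..})"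
proof -
  have f: "(\<lambda>x. ennreal (if x \<le> y then a else b)) \<in> borel_measurable \<nu>"
  proof -
    have "(\<lambda>x::real. ennreal (if x \<le> y then a else b)) \<in> borel_measurable borel" by measurable
    then show ?thesis using measurable_cong_sets[OF s refl] by blast
  qed
  have E': "E \<in> sets \<nu>" using E s by simp
  have s1: "E \<inter> {..y} \<in> sets \<nu>" using E s by simp
  have s2: "E \<inter> {y<..} \<in> sets \<nu>" using E s by simp
  have "emeasure (stp \<nu> a b y) E = (\<integral>\<^sup>+ x. ennreal (if x \<le> y then a else b) * indicator E x \<partial>\<nu>)"
    unfolding stp_def using f E' by (rule emeasure_density)
  also have "\<dots> = (\<integral>\<^sup>+ x. ennreal a * indicator (E \<inter> {..y}) x + ennreal b * indicator (E \<inter> {y<..}) x \<partial>\<nu>)"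
    by (rule nn_integral_cong) (auto simp: indicator_def)
  also have "\<dots> = (\<integral>\<^sup>+ x. ennreal a * indicator (E \<inter> {..y}) x \<partial>\<nu>) + (\<integral>\<^sup>+ x. ennreal b * indicator (E \<inter> {y<..}) x \<partial>\<nu>)"
    by (rule nn_integral_add) (use s1 s2 in auto)
  also have "\<dots> = ennreal a * emeasure \<nu> (E \<inter> {..y}) + ennreal b * emeasure \<nu> (E \<inter> {y<..})"
    using s1 s2 by (simp add: nn_integral_cmult_indicator)
  finally show ?thesis .
qed

lemma finite_stp:
  assumes "finite_measure \<nu>" "sets \<nu> = sets borel"
  shows "finite_measure (stp \<nu> a b y)"
proof (rule finite_measureI)
  interpret finite_measure \<nu> by fact
  have sp: "space \<nu> = UNIV" using sets_eq_imp_space_eq[OF assms(2)] by simp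
  have "emeasure (stp \<nu> a b y) UNIV = ennreal a * emeasure \<nu> (UNIV \<inter> {..y}) + ennreal b * emeasure \<nu> (UNIV \<inter> {y<..})"
    using assms(2) by (rule emeasure_stp) simp
  then show "emeasure (stp \<nu> a b y) (space (stp \<nu> a b y)) \<noteq> \<infinity>"
    using sp by (simp add: emeasure_eq_measure ennreal_mult_eq_top_iff)
qed

lemma measure_stp:
  assumes "finite_measure \<nu>" "sets \<nu> = sets borel" "E \<in> sets borel" "0 \<le> a" "0 \<le> b"
  shows "measure (stp \<nu> a b y) E = a * measure \<nu> (E \<inter> {..y}) + b * measure \<nu> (E \<inter> {y<..})"
proof -
  interpret finite_measure \<nu> by fact
  have X: "emeasure (stp \<nu> a b y) E = ennreal (a * measure \<nu> (E \<inter> {..y}) + b * measure \<nu> (E \<inter> {y<..}))"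
    using emeasure_stp[OF assms(2,3)] assms(4,5)
    by (simp add: emeasure_eq_measure ennreal_mult'[symmetric] ennreal_plus[symmetric] del: ennreal_plus)
  have "0 \<le> a * measure \<nu> (E \<inter> {..y}) + b * measure \<nu> (E \<inter> {y<..})"
    using assms(4,5) by simp
  then show ?thesis unfolding measure_def X by simp
qed

lemma measure_split_y:
  fixes \<nu> :: "real measure"
  assumes "finite_measure \<nu>" "sets \<nu> = sets borel" "E \<in> sets borel"
  shows "measure \<nu> E = measure \<nu> (E \<inter> {..y}) + measure \<nu> (E \<inter> {y<..})"
proof -
  interpret finite_measure \<nu> by fact
  have "measure \<nu> ((E \<inter> {..y}) \<union> (E \<inter> {y<..})) = measure \<nu> (E \<inter> {..y}) + measure \<nu> (E \<inter> {y<..})"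
  proof (rule finite_measure_Union)
    show "E \<inter> {..y} \<in> sets \<nu>" unfolding assms(2) by (intro sets.Int assms(3)) simp
    show "E \<inter> {y<..} \<in> sets \<nu>" unfolding assms(2) by (intro sets.Int assms(3)) simp
    show "E \<inter> {..y} \<inter> (E \<inter> {y<..}) = {}" by auto
  qed
  moreover have "(E \<inter> {..y}) \<union> (E \<inter> {y<..}) = E" by (auto simp: not_less)
  ultimately show ?thesis by simp
qed

definition pairK :: "real measure \<Rightarrow> real measure \<Rightarrow> real \<Rightarrow> (real \<times> real \<Rightarrow> rest) \<Rightarrow> rest measure" where
  "pairK X Y m f = distr (scale_measure (ennreal (1/m)) (X \<Otimes>\<^sub>M Y)) restM f"

lemma sets_pairK[simp]: "sets (pairK X Y m f) = sets restM" by (simp add: pairK_def)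

lemma emeasure_pairK:
  assumes fX: "finite_measure X" and fY: "finite_measure Y" and sX: "sets X = sets borel" and sY: "sets Y = sets borel"
    and f: "f \<in> borel \<Otimes>\<^sub>M borel \<rightarrow>\<^sub>M restM" and S: "S \<in> sets restM"
    and pre: "f -` S = E1 \<times> E2" and E1: "E1 \<in> sets borel" and E2: "E2 \<in> sets borel"
  shows "emeasure (pairK X Y m f) S = ennreal (measure X E1 * measure Y E2 / m)"
proof -
  interpret X: finite_measure X by fact
  interpret Y: finite_measure Y by fact
  have spX: "space X = UNIV" using sets_eq_imp_space_eq[OF sX] by simp
  have spY: "space Y = UNIV" using sets_eq_imp_space_eq[OF sY] by simp
  have sXY: "sets (X \<Otimes>\<^sub>M Y) = sets (borel \<Otimes>\<^sub>M borel)" using sX sY by (rule sets_pair_measure_cong)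
  have f': "f \<in> scale_measure (ennreal (1/m)) (X \<Otimes>\<^sub>M Y) \<rightarrow>\<^sub>M restM"
    using f measurable_cong_sets[of "scale_measure (ennreal (1/m)) (X \<Otimes>\<^sub>M Y)" "borel \<Otimes>\<^sub>M borel" restM restM] sXY by simp
  have "emeasure (pairK X Y m f) S = emeasure (scale_measure (ennreal (1/m)) (X \<Otimes>\<^sub>M Y)) (f -` S \<inter> space (scale_measure (ennreal (1/m)) (X \<Otimes>\<^sub>M Y)))"
    unfolding pairK_def using f' S by (rule emeasure_distr)
  also have "f -` S \<inter> space (scale_measure (ennreal (1/m)) (X \<Otimes>\<^sub>M Y)) = E1 \<times> E2"
  proof -
    have "space (scale_measure (ennreal (1/m)) (X \<Otimes>\<^sub>M Y)) = space (X \<Otimes>\<^sub>M Y)"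
      by (rule sets_eq_imp_space_eq) simp
    then show ?thesis using pre by (simp add: space_pair_measure spX spY)
  qed
  also have "emeasure (scale_measure (ennreal (1/m)) (X \<Otimes>\<^sub>M Y)) (E1 \<times> E2) = ennreal (1/m) * (emeasure X E1 * emeasure Y E2)"
    using E1 E2 sX sY by (simp add: Y.emeasure_pair_measure_Times)
  also have "\<dots> = ennreal (measure X E1 * measure Y E2 / m)"
  proof (cases "m \<ge> 0")
    case True then show ?thesis
      by (simp add: X.emeasure_eq_measure Y.emeasure_eq_measure ennreal_mult'[symmetric] ennreal_mult[symmetric] mult.commute)
  next
    case False then show ?thesis by (simp add: ennreal_neg divide_nonneg_neg mult_nonneg_nonneg)
  qed
  finally show ?thesis .
qed

lemma pairK_fst:
  assumes fX: "finite_measure X" and fY: "finite_measure Y" and sX: "sets X = sets borel" and sY: "sets Y = sets borel"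
    and mX: "measure X UNIV = m" and mY: "measure Y UNIV = m"
    and f: "f \<in> borel \<Otimes>\<^sub>M borel \<rightarrow>\<^sub>M restM" and S: "S \<in> sets restM"
    and pre: "f -` S = E \<times> UNIV" and E: "E \<in> sets borel"
  shows "emeasure (pairK X Y m f) S = ennreal (measure X E)"
proof -
  have "emeasure (pairK X Y m f) S = ennreal (measure X E * measure Y UNIV / m)"
    by (rule emeasure_pairK[OF fX fY sX sY f S pre E]) simp
  also have "measure X E * measure Y UNIV / m = measure X E"
  proof (cases "m = 0")
    case True
    interpret X: finite_measure X by fact
    have "measure X E \<le> measure X UNIV"
      using sets_eq_imp_space_eq[OF sX] by (metis X.bounded_measure space_borel)
    then show ?thesis using True mX measure_nonneg[of X E] by simp
  qed (simp add: mY)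
  finally show ?thesis .
qed

lemma pairK_snd:
  assumes fX: "finite_measure X" and fY: "finite_measure Y" and sX: "sets X = sets borel" and sY: "sets Y = sets borel"
    and mX: "measure X UNIV = m" and mY: "measure Y UNIV = m"
    and f: "f \<in> borel \<Otimes>\<^sub>M borel \<rightarrow>\<^sub>M restM" and S: "S \<in> sets restM"
    and pre: "f -` S = UNIV \<times> E" and E: "E \<in> sets borel"
  shows "emeasure (pairK X Y m f) S = ennreal (measure Y E)"
proof -
  have "emeasure (pairK X Y m f) S = ennreal (measure X UNIV * measure Y E / m)"
    by (rule emeasure_pairK[OF fX fY sX sY f S pre]) (simp_all add: E)
  also have "measure X UNIV * measure Y E / m = measure Y E"
  proof (cases "m = 0")
    case True
    interpret Y: finite_measure Y by fact
    have "measure Y E \<le> measure Y UNIV"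
      using sets_eq_imp_space_eq[OF sY] by (metis Y.bounded_measure space_borel)
    then show ?thesis using True mY measure_nonneg[of Y E] by simp
  qed (simp add: mX)
  finally show ?thesis .
qed

lemma pairK_empty:
  assumes fX: "finite_measure X" and fY: "finite_measure Y" and sX: "sets X = sets borel" and sY: "sets Y = sets borel"
    and f: "f \<in> borel \<Otimes>\<^sub>M borel \<rightarrow>\<^sub>M restM" and S: "S \<in> sets restM"
    and pre: "f -` S = {}"
  shows "emeasure (pairK X Y m f) S = 0"
  using emeasure_pairK[OF fX fY sX sY f S, of "{}" "{}"] pre by simp



lemma prodform_fst: "prodform M B R \<Longrightarrow> fst \<in> M \<rightarrow>\<^sub>M count_space UNIV"
proof -
  assume a: "prodform M B R"
  then have "M = B \<Otimes>\<^sub>M R" "sets B = sets (count_space UNIV)" by (simp_all add: prodform_def)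
  then show ?thesis using measurable_fst[of B R] measurable_cong_sets[of "B \<Otimes>\<^sub>M R" "B \<Otimes>\<^sub>M R" B "count_space UNIV"] by simp
qed

lemma prodform_snd: "prodform M B R \<Longrightarrow> snd \<in> M \<rightarrow>\<^sub>M restM"
proof -
  assume a: "prodform M B R"
  then have "M = B \<Otimes>\<^sub>M R" "sets R = sets restM" by (simp_all add: prodform_def)
  then show ?thesis using measurable_snd[of B R] measurable_cong_sets[of "B \<Otimes>\<^sub>M R" "B \<Otimes>\<^sub>M R" R restM] by simp
qed

lemma vimage_fst_UNIV: "fst -` A = A \<times> UNIV" by auto
lemma vimage_snd_UNIV: "snd -` A = UNIV \<times> A" by auto

lemma prodform_RA:
  assumes a: "prodform M B R" shows "RA M"
proof -
  interpret M: prob_space M using prodform_prob[OF a] .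
  interpret R: prob_space R using a by (simp add: prodform_def)
  interpret B: prob_space B using a by (simp add: prodform_def)
  have sp: "space M = UNIV" by (rule prodform_space[OF a])
  have spR: "space R = UNIV" using sets_eq_imp_space_eq[of R restM] a by (simp add: prodform_def)
  have spB: "space B = UNIV" using sets_eq_imp_space_eq[of B "count_space UNIV"] a by (simp add: prodform_def)
  have sM: "sets M = sets latM" by (rule prodform_sets[OF a])
  let ?A = "{fst -` A \<inter> space M | A. A \<in> sets (count_space UNIV)}"
  let ?S = "{snd -` A \<inter> space M | A. A \<in> sets restM}"
  have "M.indep_set ?A ?S"
    unfolding M.indep_sets2_eq
  proof (intro conjI ballI)
    show "?A \<subseteq> M.events" using prodform_fst[OF a] by (auto intro: measurable_sets)
    show "?S \<subseteq> M.events" using prodform_snd[OF a] by (auto intro: measurable_sets)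
    fix x y assume x: "x \<in> ?A" and y: "y \<in> ?S"
    from x obtain A where "x = fst -` A \<inter> space M" by auto
    then have xA: "x = A \<times> UNIV" unfolding sp vimage_fst_UNIV by simp
    from y obtain S where "y = snd -` S \<inter> space M" and S: "S \<in> sets restM" by auto
    then have yS: "y = UNIV \<times> S" unfolding sp vimage_snd_UNIV by simp
    have "x \<inter> y = A \<times> S" unfolding xA yS by (simp add: Times_Int_Times)
    then show "M.prob (x \<inter> y) = M.prob x * M.prob y"
      unfolding xA yS using prodform_Times[OF a S, of A] prodform_Times[OF a S, of UNIV]
        prodform_Times[OF a, of UNIV A] sets.top[of restM] R.prob_space B.prob_space spR spB by simp
  qed
  then have "M.indep_set (sigma_sets (space M) ?A) (sigma_sets (space M) ?S)"
  proof (rule M.indep_set_sigma_sets)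
    show "Int_stable ?A" unfolding Int_stable_def
    proof (intro ballI)
      fix a b assume "a \<in> ?A" "b \<in> ?A"
      then obtain A1 A2 where "a = fst -` A1 \<inter> space M" "b = fst -` A2 \<inter> space M" by blast
      then have "a \<inter> b = fst -` (A1 \<inter> A2) \<inter> space M" by (simp add: vimage_Int Int_ac)
      then show "a \<inter> b \<in> ?A" by (intro CollectI exI[of _ "A1 \<inter> A2"]) simp
    qed
    show "Int_stable ?S" unfolding Int_stable_def
    proof (intro ballI)
      fix a b assume "a \<in> ?S" "b \<in> ?S"
      then obtain A1 A2 where "a = snd -` A1 \<inter> space M" "b = snd -` A2 \<inter> space M"
        "A1 \<in> sets restM" "A2 \<in> sets restM" by blast
      then have "a \<inter> b = snd -` (A1 \<inter> A2) \<inter> space M" "A1 \<inter> A2 \<in> sets restM" by (simp_all add: vimage_Int Int_ac sets.Int)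
      then show "a \<inter> b \<in> ?S" by (intro CollectI exI[of _ "A1 \<inter> A2"]) simp
    qed
  qed
  then show ?thesis unfolding RA_def using prodform_fst[OF a] prodform_snd[OF a] by simp
qed

definition g1 :: "rest \<Rightarrow> real \<times> bool \<times> bool" where "g1 r = (ry (d1 r) True r, d1 r, True)"
definition g0 :: "rest \<Rightarrow> real \<times> bool \<times> bool" where "g0 r = (ry (d0 r) False r, d0 r, False)"

lemma ry_d_meas: "(\<lambda>r. ry (d1 r) True r) \<in> borel_measurable restM" "(\<lambda>r. ry (d0 r) False r) \<in> borel_measurable restM"
proof -
  have "(\<lambda>r. ry (d1 r) True r) = (\<lambda>r. if d1 r then ry True True r else ry False True r)" by auto
  moreover have "(\<lambda>r. if d1 r then ry True True r else ry False True r) \<in> borel_measurable restM" by measurable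
  ultimately show "(\<lambda>r. ry (d1 r) True r) \<in> borel_measurable restM" by simp
  have "(\<lambda>r. ry (d0 r) False r) = (\<lambda>r. if d0 r then ry True False r else ry False False r)" by auto
  moreover have "(\<lambda>r. if d0 r then ry True False r else ry False False r) \<in> borel_measurable restM" by measurable
  ultimately show "(\<lambda>r. ry (d0 r) False r) \<in> borel_measurable restM" by simp
qed

lemma g_meas: "g1 \<in> restM \<rightarrow>\<^sub>M obsM" "g0 \<in> restM \<rightarrow>\<^sub>M obsM"
  unfolding g1_def g0_def obsM_def using ry_d_meas by measurable

lemma obs_eq: "obs w = (if Zv w then g1 (snd w) else g0 (snd w))"
  by (simp add: obs_def g1_def g0_def Yv_Z Yv_nZ Dv_Z Dv_nZ)

lemma obs_meas: "obs \<in> latM \<rightarrow>\<^sub>M obsM"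
proof -
  have "(\<lambda>w. if Zv w then g1 (snd w) else g0 (snd w)) \<in> latM \<rightarrow>\<^sub>M obsM"
    unfolding latM_def Zv_def using g_meas by measurable
  moreover have "obs = (\<lambda>w. if Zv w then g1 (snd w) else g0 (snd w))" using obs_eq by auto
  ultimately show ?thesis by simp
qed

lemma two_slices:
  assumes a: "prodform M B R" and A1: "A1 \<in> sets restM" and A0: "A0 \<in> sets restM"
  shows "measure M ({True} \<times> A1 \<union> {False} \<times> A0) = measure B {True} * measure R A1 + measure B {False} * measure R A0"
proof -
  interpret M: prob_space M using prodform_prob[OF a] .
  have sM: "sets M = sets (count_space UNIV \<Otimes>\<^sub>M restM)" using prodform_sets[OF a] by (simp add: latM_def)
  have 1: "{True} \<times> A1 \<in> sets M" unfolding sM using A1 by (intro pair_measureI) simp_all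
  have 0: "{False} \<times> A0 \<in> sets M" unfolding sM using A0 by (intro pair_measureI) simp_all
  have "measure M ({True} \<times> A1 \<union> {False} \<times> A0) = measure M ({True} \<times> A1) + measure M ({False} \<times> A0)"
    by (rule M.finite_measure_Union[OF 1 0]) (simp add: Times_Int_Times)
  then show ?thesis using prodform_Times[OF a A1] prodform_Times[OF a A0] by simp
qed

lemma slice_meas: "S \<in> sets obsM \<Longrightarrow> {x. (x, d, z) \<in> S} \<in> sets borel"
proof -
  assume S: "S \<in> sets obsM"
  have "(\<lambda>x::real. (x, d, z)) \<in> borel \<rightarrow>\<^sub>M obsM" unfolding obsM_def by measurable
  from measurable_sets[OF this S] show ?thesis by (simp add: vimage_def)
qed

lemma A1_mu:
  assumes a: "prodform M B R" and S: "S \<in> sets obsM"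
  shows "measure R (g1 -` S) = mu R (\<lambda>r. ry True True r \<in> {x. (x, True, True) \<in> S} \<and> d1 r)
     + mu R (\<lambda>r. ry False True r \<in> {x. (x, False, True) \<in> S} \<and> \<not> d1 r)"
proof -
  have E1: "{x. (x, True, True) \<in> S} \<in> sets borel" "{x. (x, False, True) \<in> S} \<in> sets borel"
    using slice_meas[OF S] by auto
  have "measure R (g1 -` S) = mu R (\<lambda>r. g1 r \<in> S)" by (simp add: mu_def vimage_def)
  also have "\<dots> = mu R (\<lambda>r. g1 r \<in> S \<and> d1 r) + mu R (\<lambda>r. g1 r \<in> S \<and> \<not> d1 r)"
    by (rule mu_split[OF a]) (use g_meas S in measurable)
  also have "mu R (\<lambda>r. g1 r \<in> S \<and> d1 r) = mu R (\<lambda>r. ry True True r \<in> {x. (x, True, True) \<in> S} \<and> d1 r)"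
    by (rule mu_cong) (auto simp: g1_def)
  also have "mu R (\<lambda>r. g1 r \<in> S \<and> \<not> d1 r) = mu R (\<lambda>r. ry False True r \<in> {x. (x, False, True) \<in> S} \<and> \<not> d1 r)"
    by (rule mu_cong) (auto simp: g1_def)
  finally show ?thesis .
qed

lemma A0_mu:
  assumes a: "prodform M B R" and S: "S \<in> sets obsM"
  shows "measure R (g0 -` S) = mu R (\<lambda>r. ry True False r \<in> {x. (x, True, False) \<in> S} \<and> d0 r)
     + mu R (\<lambda>r. ry False False r \<in> {x. (x, False, False) \<in> S} \<and> \<not> d0 r)"
proof -
  have "measure R (g0 -` S) = mu R (\<lambda>r. g0 r \<in> S)" by (simp add: mu_def vimage_def)
  also have "\<dots> = mu R (\<lambda>r. g0 r \<in> S \<and> d0 r) + mu R (\<lambda>r. g0 r \<in> S \<and> \<not> d0 r)"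
    by (rule mu_split[OF a]) (use g_meas S in measurable)
  also have "mu R (\<lambda>r. g0 r \<in> S \<and> d0 r) = mu R (\<lambda>r. ry True False r \<in> {x. (x, True, False) \<in> S} \<and> d0 r)"
    by (rule mu_cong) (auto simp: g0_def)
  also have "mu R (\<lambda>r. g0 r \<in> S \<and> \<not> d0 r) = mu R (\<lambda>r. ry False False r \<in> {x. (x, False, False) \<in> S} \<and> \<not> d0 r)"
    by (rule mu_cong) (auto simp: g0_def)
  finally show ?thesis .
qed

lemma same_obs_gen:
  assumes a: "prodform P B R" and a': "prodform Q B R'"
    and h11: "\<And>E. E \<in> sets borel \<Longrightarrow> mu R (\<lambda>r. ry True True r \<in> E \<and> d1 r) = mu R' (\<lambda>r. ry True True r \<in> E \<and> d1 r)"
    and h10: "\<And>E. E \<in> sets borel \<Longrightarrow> mu R (\<lambda>r. ry True False r \<in> E \<and> d0 r) = mu R' (\<lambda>r. ry True False r \<in> E \<and> d0 r)"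
    and h01: "\<And>E. E \<in> sets borel \<Longrightarrow> mu R (\<lambda>r. ry False True r \<in> E \<and> \<not> d1 r) = mu R' (\<lambda>r. ry False True r \<in> E \<and> \<not> d1 r)"
    and h00: "\<And>E. E \<in> sets borel \<Longrightarrow> mu R (\<lambda>r. ry False False r \<in> E \<and> \<not> d0 r) = mu R' (\<lambda>r. ry False False r \<in> E \<and> \<not> d0 r)"
  shows "same_obs P Q"
  unfolding same_obs_def
proof (rule measure_eqI)
  show "sets (distr P obsM obs) = sets (distr Q obsM obs)" by simp
  fix S assume "S \<in> sets (distr P obsM obs)"
  then have S: "S \<in> sets obsM" by simp
  have g1S: "g1 -` S \<in> sets restM" using measurable_sets[OF g_meas(1) S] by simp
  have g0S: "g0 -` S \<in> sets restM" using measurable_sets[OF g_meas(2) S] by simp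
  have pre: "obs -` S \<inter> space M = {True} \<times> g1 -` S \<union> {False} \<times> g0 -` S" if "prodform M B R''" for M R''
    unfolding prodform_space[OF that]
    by (rule set_eqI) (auto simp: obs_eq Zv_def split: if_splits)
  have em: "emeasure (distr M obsM obs) S = ennreal (measure B {True} * measure R'' (g1 -` S) + measure B {False} * measure R'' (g0 -` S))"
    if pf: "prodform M B R''" for M R''
  proof -
    interpret M: prob_space M using prodform_prob[OF pf] .
    have om: "obs \<in> M \<rightarrow>\<^sub>M obsM" using obs_meas measurable_cong_sets[OF prodform_sets[OF pf] refl] by blast
    have "emeasure (distr M obsM obs) S = emeasure M (obs -` S \<inter> space M)" by (rule emeasure_distr[OF om S])
    also have "\<dots> = ennreal (measure M ({True} \<times> g1 -` S \<union> {False} \<times> g0 -` S))"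
      unfolding pre[OF pf] M.emeasure_eq_measure ..
    also have "\<dots> = ennreal (measure B {True} * measure R'' (g1 -` S) + measure B {False} * measure R'' (g0 -` S))"
      using two_slices[OF pf g1S g0S] by simp
    finally show ?thesis .
  qed
  have E: "{x. (x, d, z) \<in> S} \<in> sets borel" for d z using slice_meas[OF S] .
  show "emeasure (distr P obsM obs) S = emeasure (distr Q obsM obs) S"
    unfolding em[OF a] em[OF a'] A1_mu[OF a S] A1_mu[OF a' S] A0_mu[OF a S] A0_mu[OF a' S]
    using h11[OF E] h10[OF E] h01[OF E] h00[OF E] by simp
qed



lemma UNIV_restM[simp]: "UNIV \<in> sets restM" using sets.top[of restM] by simp

definition mixK :: "(ctype \<Rightarrow> rest measure) \<Rightarrow> rest measure" where
  "mixK K = bind (count_space UNIV) K"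

lemma ctype_UNIV: "(UNIV :: ctype set) = {TA, TN, TC, TDF}"
proof -
  have "t \<in> {TA, TN, TC, TDF}" for t by (cases t) auto
  then show ?thesis by blast
qed

lemma mixK_props:
  assumes K1: "\<And>t. subprob_space (K t)" and K2: "\<And>t. sets (K t) = sets restM"
  shows "sets (mixK K) = sets restM"
    and "S \<in> sets restM \<Longrightarrow> emeasure (mixK K) S = emeasure (K TA) S + emeasure (K TN) S + emeasure (K TC) S + emeasure (K TDF) S"
proof -
  have ne: "space (count_space (UNIV :: ctype set)) \<noteq> {}" by simp
  show "sets (mixK K) = sets restM" unfolding mixK_def by (rule sets_bind[OF _ ne]) (simp add: K2)
  have Km: "K \<in> count_space UNIV \<rightarrow>\<^sub>M subprob_algebra restM"
    using K1 K2 by (simp add: space_subprob_algebra)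
  assume S: "S \<in> sets restM"
  have "emeasure (mixK K) S = (\<integral>\<^sup>+ t. emeasure (K t) S \<partial>count_space UNIV)"
    unfolding mixK_def by (rule emeasure_bind[OF ne Km S])
  also have "\<dots> = (\<Sum>t\<in>UNIV. emeasure (K t) S)"
    by (rule nn_integral_count_space_finite) (simp add: ctype_UNIV)
  also have "\<dots> = emeasure (K TA) S + emeasure (K TN) S + emeasure (K TC) S + emeasure (K TDF) S"
    by (simp add: ctype_UNIV add.assoc)
  finally show "emeasure (mixK K) S = emeasure (K TA) S + emeasure (K TN) S + emeasure (K TC) S + emeasure (K TDF) S" .
qed

lemma measure_pairK_fst:
  assumes "finite_measure X" "finite_measure Y" "sets X = sets borel" "sets Y = sets borel"
    "measure X UNIV = m" "measure Y UNIV = m" "f \<in> borel \<Otimes>\<^sub>M borel \<rightarrow>\<^sub>M restM" "S \<in> sets restM"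
    "f -` S = E \<times> UNIV" "E \<in> sets borel"
  shows "measure (pairK X Y m f) S = measure X E"
  using pairK_fst[OF assms] by (simp add: measure_def)

lemma measure_pairK_snd:
  assumes "finite_measure X" "finite_measure Y" "sets X = sets borel" "sets Y = sets borel"
    "measure X UNIV = m" "measure Y UNIV = m" "f \<in> borel \<Otimes>\<^sub>M borel \<rightarrow>\<^sub>M restM" "S \<in> sets restM"
    "f -` S = UNIV \<times> E" "E \<in> sets borel"
  shows "measure (pairK X Y m f) S = measure Y E"
  using pairK_snd[OF assms] by (simp add: measure_def)

lemma measure_pairK_empty:
  assumes "finite_measure X" "finite_measure Y" "sets X = sets borel" "sets Y = sets borel"
    "f \<in> borel \<Otimes>\<^sub>M borel \<rightarrow>\<^sub>M restM" "S \<in> sets restM" "f -` S = {}"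
  shows "measure (pairK X Y m f) S = 0"
  using pairK_empty[OF assms] by (simp add: measure_def)

lemma subprob_pairK:
  assumes "finite_measure X" "finite_measure Y" "sets X = sets borel" "sets Y = sets borel"
    "measure X UNIV = m" "measure Y UNIV = m" "f \<in> borel \<Otimes>\<^sub>M borel \<rightarrow>\<^sub>M restM" "m \<le> 1"
  shows "subprob_space (pairK X Y m f)"
proof (rule subprob_spaceI)
  have sp: "space (pairK X Y m f) = UNIV" using sets_eq_imp_space_eq[OF sets_pairK] by simp
  have "emeasure (pairK X Y m f) UNIV = ennreal (measure X UNIV)"
    by (rule pairK_fst[OF assms(1-7)]) auto
  then show "emeasure (pairK X Y m f) (space (pairK X Y m f)) \<le> 1" using assms(5,8) sp by simp
  show "space (pairK X Y m f) \<noteq> {}" using sp by simp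
qed

lemma stp_sum:
  assumes "finite_measure \<nu>" "sets \<nu> = sets borel" "E \<in> sets borel" "0 \<le> a" "a \<le> 1" "0 \<le> b" "b \<le> 1"
  shows "measure (stp \<nu> a b y) E + measure (stp \<nu> (1 - a) (1 - b) y) E = measure \<nu> E"
  using measure_stp[OF assms(1-4,6), of y] measure_stp[OF assms(1-3), of "1-a" "1-b" y] assms(5,7)
    measure_split_y[OF assms(1-3), of y]
  by (simp add: algebra_simps)

lemma fa_simps[simp]: "ry True True (fa p) = fst p" "ry True False (fa p) = snd p" "d0 (fa p) = True" "d1 (fa p) = True"
  by (simp_all add: fa_def ry_def d0_def d1_def)
lemma fc_simps[simp]: "ry True True (fc p) = fst p" "ry False False (fc p) = snd p" "d0 (fc p) = False" "d1 (fc p) = True"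
  by (simp_all add: fc_def ry_def d0_def d1_def)
lemma fn_simps[simp]: "ry False True (fn p) = fst p" "ry False False (fn p) = snd p" "d0 (fn p) = False" "d1 (fn p) = False"
  by (simp_all add: fn_def ry_def d0_def d1_def)

definition n11 :: "rest measure \<Rightarrow> real measure" where "n11 R = nu R (ry True True) d1"
definition n10 :: "rest measure \<Rightarrow> real measure" where "n10 R = nu R (ry True False) d0"
definition n01 :: "rest measure \<Rightarrow> real measure" where "n01 R = nu R (ry False True) (\<lambda>r. \<not> d1 r)"
definition n00 :: "rest measure \<Rightarrow> real measure" where "n00 R = nu R (ry False False) (\<lambda>r. \<not> d0 r)"

definition KQ :: "rest measure \<Rightarrow> real \<Rightarrow> real \<Rightarrow> real \<Rightarrow> real \<Rightarrow> real \<Rightarrow> real \<Rightarrow> ctype \<Rightarrow> rest measure" where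
  "KQ R a1 b1 y1 a0 b0 y0 t = (case t of
     TA \<Rightarrow> pairK (stp (n11 R) a1 b1 y1) (n10 R) (mu R d0) fa
   | TC \<Rightarrow> pairK (stp (n11 R) (1 - a1) (1 - b1) y1) (stp (n00 R) (1 - a0) (1 - b0) y0) (mu R d1 - mu R d0) fc
   | TN \<Rightarrow> pairK (n01 R) (stp (n00 R) a0 b0 y0) (mu R (\<lambda>r. \<not> d1 r)) fn
   | TDF \<Rightarrow> null_measure restM)"

definition RQ :: "rest measure \<Rightarrow> real \<Rightarrow> real \<Rightarrow> real \<Rightarrow> real \<Rightarrow> real \<Rightarrow> real \<Rightarrow> rest measure" where
  "RQ R a1 b1 y1 a0 b0 y0 = mixK (KQ R a1 b1 y1 a0 b0 y0)"

lemma pred_set: "Measurable.pred restM P \<Longrightarrow> {r. P r} \<in> sets restM"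
  unfolding pred_def by simp

lemma sharp_gen:
  fixes R :: "rest measure"
  assumes a: "prodform P B R" and hpc: "mu R d1 - mu R d0 > 0"
    and p: "0 \<le> a1" "a1 \<le> 1" "0 \<le> b1" "b1 \<le> 1" "0 \<le> a0" "a0 \<le> 1" "0 \<le> b0" "b0 \<le> 1"
    and mA: "measure (stp (n11 R) a1 b1 y1) UNIV = mu R d0"
    and mN: "measure (stp (n00 R) a0 b0 y0) UNIV = mu R (\<lambda>r. \<not> d1 r)"
  defines "R' \<equiv> RQ R a1 b1 y1 a0 b0 y0"
  shows "prodform (B \<Otimes>\<^sub>M R') B R'" "same_obs P (B \<Otimes>\<^sub>M R')" "MON (B \<Otimes>\<^sub>M R')"
    "mu R' (\<lambda>r. ry True True r \<le> y1 \<and> tp TA r) = measure (stp (n11 R) a1 b1 y1) {..y1}"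
    "mu R' (tp TA) = mu R d0"
    "mu R' (\<lambda>r. ry False False r \<le> y0 \<and> tp TN r) = measure (stp (n00 R) a0 b0 y0) {..y0}"
    "mu R' (tp TN) = mu R (\<lambda>r. \<not> d1 r)"
proof -
  let ?K = "KQ R a1 b1 y1 a0 b0 y0"
  let ?XA = "stp (n11 R) a1 b1 y1" and ?XC = "stp (n11 R) (1 - a1) (1 - b1) y1"
  let ?YC = "stp (n00 R) (1 - a0) (1 - b0) y0" and ?YN = "stp (n00 R) a0 b0 y0"
  have f11: "finite_measure (n11 R)" unfolding n11_def by (rule finite_nu[OF a]) measurable
  have f10: "finite_measure (n10 R)" unfolding n10_def by (rule finite_nu[OF a]) measurable
  have f01: "finite_measure (n01 R)" unfolding n01_def by (rule finite_nu[OF a]) measurable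
  have f00: "finite_measure (n00 R)" unfolding n00_def by (rule finite_nu[OF a]) measurable
  have s11: "sets (n11 R) = sets borel" "sets (n10 R) = sets borel" "sets (n01 R) = sets borel" "sets (n00 R) = sets borel"
    by (simp_all add: n11_def n10_def n01_def n00_def)
  have fXA: "finite_measure ?XA" by (rule finite_stp[OF f11 s11(1)])
  have fXC: "finite_measure ?XC" by (rule finite_stp[OF f11 s11(1)])
  have fYC: "finite_measure ?YC" by (rule finite_stp[OF f00 s11(4)])
  have fYN: "finite_measure ?YN" by (rule finite_stp[OF f00 s11(4)])
  have sX: "sets ?XA = sets borel" "sets ?XC = sets borel" "sets ?YC = sets borel" "sets ?YN = sets borel"
    using s11 by simp_all
  have mn11: "measure (n11 R) E = mu R (\<lambda>r. ry True True r \<in> E \<and> d1 r)" if "E \<in> sets borel" for E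
    unfolding n11_def by (rule measure_nu[OF a _ _ that]) measurable
  have mn10: "measure (n10 R) E = mu R (\<lambda>r. ry True False r \<in> E \<and> d0 r)" if "E \<in> sets borel" for E
    unfolding n10_def by (rule measure_nu[OF a _ _ that]) measurable
  have mn01: "measure (n01 R) E = mu R (\<lambda>r. ry False True r \<in> E \<and> \<not> d1 r)" if "E \<in> sets borel" for E
    unfolding n01_def by (rule measure_nu[OF a _ _ that]) measurable
  have mn00: "measure (n00 R) E = mu R (\<lambda>r. ry False False r \<in> E \<and> \<not> d0 r)" if "E \<in> sets borel" for E
    unfolding n00_def by (rule measure_nu[OF a _ _ that]) measurable
  have cmpl: "mu R (\<lambda>r. \<not> d r) = 1 - mu R d" if "Measurable.pred restM d" for d
  proof -
    have "mu R (\<lambda>_. True) = mu R (\<lambda>r. True \<and> d r) + mu R (\<lambda>r. True \<and> \<not> d r)"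
      by (rule mu_split[OF a]) (use that in measurable)
    then show ?thesis using mu_true[OF a] by simp
  qed
  have M11: "measure (n11 R) UNIV = mu R d1" using mn11[of UNIV] by simp
  have M10: "measure (n10 R) UNIV = mu R d0" using mn10[of UNIV] by simp
  have M01: "measure (n01 R) UNIV = mu R (\<lambda>r. \<not> d1 r)" using mn01[of UNIV] by simp
  have M00: "measure (n00 R) UNIV = mu R (\<lambda>r. \<not> d0 r)" using mn00[of UNIV] by simp
  have c0: "mu R (\<lambda>r. \<not> d0 r) = 1 - mu R d0" by (rule cmpl) measurable
  have c1: "mu R (\<lambda>r. \<not> d1 r) = 1 - mu R d1" by (rule cmpl) measurable
  have mC1: "measure ?XC UNIV = mu R d1 - mu R d0"
    using stp_sum[OF f11 s11(1) _ p(1-4), of UNIV y1] mA M11 by simp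
  have mC0: "measure ?YC UNIV = mu R d1 - mu R d0"
    using stp_sum[OF f00 s11(4) _ p(5-8), of UNIV y0] mN M00 c0 c1 by simp
  have le1: "mu R d0 \<le> 1" "mu R (\<lambda>r. \<not> d1 r) \<le> 1" "mu R d1 - mu R d0 \<le> 1"
    using mu_le1[OF a, of d0] mu_le1[OF a, of "\<lambda>r. \<not> d1 r"] mu_le1[OF a, of d1] mu_nonneg[of R d0] by auto
  have fm: "fa \<in> borel \<Otimes>\<^sub>M borel \<rightarrow>\<^sub>M restM" "fc \<in> borel \<Otimes>\<^sub>M borel \<rightarrow>\<^sub>M restM" "fn \<in> borel \<Otimes>\<^sub>M borel \<rightarrow>\<^sub>M restM"
    by (rule f_meas)+
  have KA: "?K TA = pairK ?XA (n10 R) (mu R d0) fa" by (simp add: KQ_def)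
  have KC: "?K TC = pairK ?XC ?YC (mu R d1 - mu R d0) fc" by (simp add: KQ_def)
  have KN: "?K TN = pairK (n01 R) ?YN (mu R (\<lambda>r. \<not> d1 r)) fn" by (simp add: KQ_def)
  have KD: "?K TDF = null_measure restM" by (simp add: KQ_def)
  have sub: "subprob_space (?K t)" for t
  proof (cases t)
    case TA then show ?thesis using subprob_pairK[OF fXA f10 sX(1) s11(2) mA M10 fm(1) le1(1)] KA by simp
  next
    case TC then show ?thesis using subprob_pairK[OF fXC fYC sX(2) sX(3) mC1 mC0 fm(2) le1(3)] KC by simp
  next
    case TN then show ?thesis using subprob_pairK[OF f01 fYN s11(3) sX(4) M01 mN fm(3) le1(2)] KN by simp
  next
    case TDF then show ?thesis using KD subprob_space_null_measure[of restM] by simp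
  qed
  have sK: "sets (?K t) = sets restM" for t by (cases t) (simp_all add: KQ_def)
  note mix = mixK_props[of ?K, OF sub sK]
  have sR': "sets R' = sets restM" unfolding R'_def RQ_def by (rule mix(1))
  have eR': "emeasure R' S = ennreal (measure (?K TA) S + measure (?K TN) S + measure (?K TC) S)" if S: "S \<in> sets restM" for S
  proof -
    have fin: "emeasure (?K t) S = ennreal (measure (?K t) S)" for t
    proof -
      interpret subprob_space "?K t" by (rule sub)
      show ?thesis by (rule emeasure_eq_measure)
    qed
    show ?thesis
      unfolding R'_def RQ_def mix(2)[OF S] fin
      by (simp add: KD ennreal_plus[symmetric] del: ennreal_plus)
  qed
  have mR': "measure R' S = measure (?K TA) S + measure (?K TN) S + measure (?K TC) S" if S: "S \<in> sets restM" for S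
  proof -
    have "0 \<le> measure (?K TA) S + measure (?K TN) S + measure (?K TC) S" by simp
    then show ?thesis unfolding measure_def[of R' S] eR'[OF S] by (simp del: ennreal_plus)
  qed
  have A1: "measure (?K TA) S = measure ?XA E" if "S \<in> sets restM" "fa -` S = E \<times> UNIV" "E \<in> sets borel" for S E
    unfolding KA by (rule measure_pairK_fst[OF fXA f10 sX(1) s11(2) mA M10 fm(1) that])
  have A2: "measure (?K TA) S = measure (n10 R) E" if "S \<in> sets restM" "fa -` S = UNIV \<times> E" "E \<in> sets borel" for S E
    unfolding KA by (rule measure_pairK_snd[OF fXA f10 sX(1) s11(2) mA M10 fm(1) that])
  have A0: "measure (?K TA) S = 0" if "S \<in> sets restM" "fa -` S = {}" for S
    unfolding KA by (rule measure_pairK_empty[OF fXA f10 sX(1) s11(2) fm(1) that])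
  have C1: "measure (?K TC) S = measure ?XC E" if "S \<in> sets restM" "fc -` S = E \<times> UNIV" "E \<in> sets borel" for S E
    unfolding KC by (rule measure_pairK_fst[OF fXC fYC sX(2) sX(3) mC1 mC0 fm(2) that])
  have C2: "measure (?K TC) S = measure ?YC E" if "S \<in> sets restM" "fc -` S = UNIV \<times> E" "E \<in> sets borel" for S E
    unfolding KC by (rule measure_pairK_snd[OF fXC fYC sX(2) sX(3) mC1 mC0 fm(2) that])
  have C0: "measure (?K TC) S = 0" if "S \<in> sets restM" "fc -` S = {}" for S
    unfolding KC by (rule measure_pairK_empty[OF fXC fYC sX(2) sX(3) fm(2) that])
  have N1: "measure (?K TN) S = measure (n01 R) E" if "S \<in> sets restM" "fn -` S = E \<times> UNIV" "E \<in> sets borel" for S E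
    unfolding KN by (rule measure_pairK_fst[OF f01 fYN s11(3) sX(4) M01 mN fm(3) that])
  have N2: "measure (?K TN) S = measure ?YN E" if "S \<in> sets restM" "fn -` S = UNIV \<times> E" "E \<in> sets borel" for S E
    unfolding KN by (rule measure_pairK_snd[OF f01 fYN s11(3) sX(4) M01 mN fm(3) that])
  have N0: "measure (?K TN) S = 0" if "S \<in> sets restM" "fn -` S = {}" for S
    unfolding KN by (rule measure_pairK_empty[OF f01 fYN s11(3) sX(4) fm(3) that])
  have "measure R' UNIV = 1"
  proof -
    have "measure R' UNIV = measure ?XA UNIV + measure (n01 R) UNIV + measure ?XC UNIV"
      using mR'[of UNIV] A1[of UNIV UNIV] N1[of UNIV UNIV] C1[of UNIV UNIV] by simp
    then show ?thesis using mA M01 mC1 c1 by simp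
  qed
  then have "emeasure R' UNIV = 1" using eR'[of UNIV] mR'[of UNIV] by simp
  then have pR': "prob_space R'"
    using sets_eq_imp_space_eq[OF sR'] by (intro prob_spaceI) simp
  show pf: "prodform (B \<Otimes>\<^sub>M R') B R'" using a pR' sR' by (simp add: prodform_def)
  have muR': "mu R' Pr = measure (?K TA) {r. Pr r} + measure (?K TN) {r. Pr r} + measure (?K TC) {r. Pr r}"
    if "Measurable.pred restM Pr" for Pr
    unfolding mu_def by (rule mR'[OF pred_set[OF that]])
  show "same_obs P (B \<Otimes>\<^sub>M R')"
  proof (rule same_obs_gen[OF a pf])
    fix E :: "real set" assume E: "E \<in> sets borel"
    have pr: "Measurable.pred restM (\<lambda>r. ry True True r \<in> E \<and> d1 r)" using E by measurable
    note S = pred_set[OF pr]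
    have "fa -` {r. ry True True r \<in> E \<and> d1 r} = E \<times> UNIV" by auto
    moreover have "fc -` {r. ry True True r \<in> E \<and> d1 r} = E \<times> UNIV" by auto
    moreover have "fn -` {r. ry True True r \<in> E \<and> d1 r} = {}" by auto
    ultimately have "mu R' (\<lambda>r. ry True True r \<in> E \<and> d1 r) = measure ?XA E + measure ?XC E"
      using muR'[OF pr] A1[OF S _ E] N0[OF S] C1[OF S _ E] by simp
    then show "mu R (\<lambda>r. ry True True r \<in> E \<and> d1 r) = mu R' (\<lambda>r. ry True True r \<in> E \<and> d1 r)"
      using stp_sum[OF f11 s11(1) E p(1-4), of y1] mn11[OF E] by simp
  next
    fix E :: "real set" assume E: "E \<in> sets borel"
    have pr: "Measurable.pred restM (\<lambda>r. ry True False r \<in> E \<and> d0 r)" using E by measurable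
    note S = pred_set[OF pr]
    have "fa -` {r. ry True False r \<in> E \<and> d0 r} = UNIV \<times> E" by auto
    moreover have "fc -` {r. ry True False r \<in> E \<and> d0 r} = {}" by auto
    moreover have "fn -` {r. ry True False r \<in> E \<and> d0 r} = {}" by auto
    ultimately have "mu R' (\<lambda>r. ry True False r \<in> E \<and> d0 r) = measure (n10 R) E"
      using muR'[OF pr] A2[OF S _ E] N0[OF S] C0[OF S] by simp
    then show "mu R (\<lambda>r. ry True False r \<in> E \<and> d0 r) = mu R' (\<lambda>r. ry True False r \<in> E \<and> d0 r)"
      using mn10[OF E] by simp
  next
    fix E :: "real set" assume E: "E \<in> sets borel"
    have pr: "Measurable.pred restM (\<lambda>r. ry False True r \<in> E \<and> \<not> d1 r)" using E by measurable
    note S = pred_set[OF pr]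
    have "fa -` {r. ry False True r \<in> E \<and> \<not> d1 r} = {}" by auto
    moreover have "fc -` {r. ry False True r \<in> E \<and> \<not> d1 r} = {}" by auto
    moreover have "fn -` {r. ry False True r \<in> E \<and> \<not> d1 r} = E \<times> UNIV" by auto
    ultimately have "mu R' (\<lambda>r. ry False True r \<in> E \<and> \<not> d1 r) = measure (n01 R) E"
      using muR'[OF pr] A0[OF S] N1[OF S _ E] C0[OF S] by simp
    then show "mu R (\<lambda>r. ry False True r \<in> E \<and> \<not> d1 r) = mu R' (\<lambda>r. ry False True r \<in> E \<and> \<not> d1 r)"
      using mn01[OF E] by simp
  next
    fix E :: "real set" assume E: "E \<in> sets borel"
    have pr: "Measurable.pred restM (\<lambda>r. ry False False r \<in> E \<and> \<not> d0 r)" using E by measurable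
    note S = pred_set[OF pr]
    have "fa -` {r. ry False False r \<in> E \<and> \<not> d0 r} = {}" by auto
    moreover have "fc -` {r. ry False False r \<in> E \<and> \<not> d0 r} = UNIV \<times> E" by auto
    moreover have "fn -` {r. ry False False r \<in> E \<and> \<not> d0 r} = UNIV \<times> E" by auto
    ultimately have "mu R' (\<lambda>r. ry False False r \<in> E \<and> \<not> d0 r) = measure ?YN E + measure ?YC E"
      using muR'[OF pr] A0[OF S] N2[OF S _ E] C2[OF S _ E] by simp
    then show "mu R (\<lambda>r. ry False False r \<in> E \<and> \<not> d0 r) = mu R' (\<lambda>r. ry False False r \<in> E \<and> \<not> d0 r)"
      using stp_sum[OF f00 s11(4) E p(5-8), of y0] mn00[OF E] by simp
  qed
  show "MON (B \<Otimes>\<^sub>M R')"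
  proof -
    have pr: "Measurable.pred restM (\<lambda>r. d0 r \<and> \<not> d1 r)" by measurable
    note S = pred_set[OF pr]
    have "fa -` {r. d0 r \<and> \<not> d1 r} = {}" "fc -` {r. d0 r \<and> \<not> d1 r} = {}" "fn -` {r. d0 r \<and> \<not> d1 r} = {}" by auto
    then have "mu R' (\<lambda>r. d0 r \<and> \<not> d1 r) = 0" using muR'[OF pr] A0[OF S] N0[OF S] C0[OF S] by simp
    then show ?thesis using MON_mu[OF pf] by simp
  qed
  show "mu R' (\<lambda>r. ry True True r \<le> y1 \<and> tp TA r) = measure (stp (n11 R) a1 b1 y1) {..y1}"
  proof -
    have pr: "Measurable.pred restM (\<lambda>r. ry True True r \<le> y1 \<and> tp TA r)" by measurable
    note S = pred_set[OF pr]
    have "fa -` {r. ry True True r \<le> y1 \<and> tp TA r} = {..y1} \<times> UNIV" "fc -` {r. ry True True r \<le> y1 \<and> tp TA r} = {}"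
      "fn -` {r. ry True True r \<le> y1 \<and> tp TA r} = {}" by auto
    then show ?thesis using muR'[OF pr] A1[OF S, of "{..y1}"] N0[OF S] C0[OF S] by simp
  qed
  show "mu R' (tp TA) = mu R d0"
  proof -
    have pr: "Measurable.pred restM (tp TA)" by measurable
    note S = pred_set[OF pr]
    have "fa -` {r. tp TA r} = UNIV \<times> UNIV" "fc -` {r. tp TA r} = {}" "fn -` {r. tp TA r} = {}" by auto
    then show ?thesis using muR'[OF pr] A1[OF S, of UNIV] N0[OF S] C0[OF S] mA by simp
  qed
  show "mu R' (\<lambda>r. ry False False r \<le> y0 \<and> tp TN r) = measure (stp (n00 R) a0 b0 y0) {..y0}"
  proof -
    have pr: "Measurable.pred restM (\<lambda>r. ry False False r \<le> y0 \<and> tp TN r)" by measurable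
    note S = pred_set[OF pr]
    have "fa -` {r. ry False False r \<le> y0 \<and> tp TN r} = {}" "fc -` {r. ry False False r \<le> y0 \<and> tp TN r} = {}"
      "fn -` {r. ry False False r \<le> y0 \<and> tp TN r} = UNIV \<times> {..y0}" by auto
    then show ?thesis using muR'[OF pr] A0[OF S] N2[OF S, of "{..y0}"] C0[OF S] by simp
  qed
  show "mu R' (tp TN) = mu R (\<lambda>r. \<not> d1 r)"
  proof -
    have pr: "Measurable.pred restM (tp TN)" by measurable
    note S = pred_set[OF pr]
    have "fa -` {r. tp TN r} = {}" "fc -` {r. tp TN r} = {}" "fn -` {r. tp TN r} = UNIV \<times> UNIV" by auto
    then show ?thesis using muR'[OF pr] A0[OF S] N1[OF S, of UNIV] C0[OF S] M01 by simp
  qed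
qed



lemma alg1:
  fixes pa pc m mR v :: real
  assumes pa: "pa \<ge> 0" and pc: "pc > 0" and m: "m \<ge> 0" and mR: "mR \<ge> 0" and s: "m + mR = pa + pc"
    and lb: "max ((m - pc) / pa) 0 \<le> v" and ub: "v \<le> min (m / pa) 1"
  defines "\<alpha> \<equiv> (if m = 0 then 0 else pa * v / m)"
    and "\<beta> \<equiv> (if mR = 0 then 0 else pa * (1 - v) / mR)"
  shows "0 \<le> \<alpha>" "\<alpha> \<le> 1" "0 \<le> \<beta>" "\<beta> \<le> 1" "\<alpha> * m + \<beta> * mR = pa" "\<alpha> * m / pa = v"
proof -
  have v0: "0 \<le> v" using lb by simp
  have v1: "v \<le> 1" using ub by simp
  have k1: "pa * v \<le> m" and k2: "pa * (1 - v) \<le> mR" and k3: "pa = 0 \<Longrightarrow> v = 0"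
  proof -
    show "pa * v \<le> m"
    proof (cases "pa = 0")
      case False then have "pa > 0" using pa by simp
      then show ?thesis using ub by (simp add: field_simps)
    qed (use m in simp)
    show "pa * (1 - v) \<le> mR"
    proof (cases "pa = 0")
      case False then have "pa > 0" using pa by simp
      then have "m - pc \<le> pa * v" using lb by (simp add: field_simps)
      then show ?thesis using s by (simp add: algebra_simps)
    qed (use mR in simp)
    show "pa = 0 \<Longrightarrow> v = 0" using ub v0 by simp
  qed
  have am: "\<alpha> * m = pa * v"
  proof (cases "m = 0")
    case True then have "pa * v = 0" using k1 mult_nonneg_nonneg[of pa v] pa v0 by linarith
    then show ?thesis by (simp add: \<alpha>_def True)
  qed (simp add: \<alpha>_def)
  have bm: "\<beta> * mR = pa * (1 - v)"
  proof (cases "mR = 0")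
    case True then have "pa * (1 - v) = 0" using k2 mult_nonneg_nonneg[of pa "1 - v"] pa v1 by linarith
    then show ?thesis by (simp add: \<beta>_def True)
  qed (simp add: \<beta>_def)
  show "0 \<le> \<alpha>" using pa v0 m by (simp add: \<alpha>_def)
  show "\<alpha> \<le> 1" using k1 m by (simp add: \<alpha>_def divide_le_eq_1)
  show "0 \<le> \<beta>" using pa v1 mR by (simp add: \<beta>_def)
  show "\<beta> \<le> 1" using k2 mR by (simp add: \<beta>_def divide_le_eq_1)
  show "\<alpha> * m + \<beta> * mR = pa" using am bm by (simp add: algebra_simps)
  show "\<alpha> * m / pa = v" using am k3 pa by (cases "pa = 0") simp_all
qed

lemma mu_compl:
  assumes a: "prodform M B R" and d: "Measurable.pred restM d"
  shows "mu R (\<lambda>r. \<not> d r) = 1 - mu R d"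
proof -
  have "mu R (\<lambda>_. True) = mu R (\<lambda>r. True \<and> d r) + mu R (\<lambda>r. True \<and> \<not> d r)"
    by (rule mu_split[OF a]) (use d in measurable)
  then show ?thesis using mu_true[OF a] by simp
qed

lemma prop_mass:
  fixes p pc :: real assumes "p \<ge> 0" "pc > 0"
  shows "0 \<le> p / (p + pc)" "p / (p + pc) \<le> 1" "p / (p + pc) * (p + pc) = p"
  using assms by (auto simp: divide_le_eq_1)

lemma setup_facts:
  assumes ld: "latent_dist P" and ra: "RA P" and mon: "MON P"
    and h: "cpr P Dv Zv - cpr P Dv (\<lambda>w. \<not> Zv w) > 0"
  defines "B \<equiv> distr P (count_space UNIV) fst" and "R \<equiv> distr P restM snd"
  shows "prodform P B R" "mu R d1 - mu R d0 > 0"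
    "ptype P TA = mu R d0" "ptype P TC = mu R d1 - mu R d0" "ptype P TN = mu R (\<lambda>r. \<not> d1 r)"
    "cpr P (\<lambda>w. Yv w \<le> y \<and> Dv w) Zv = measure (n11 R) {..y}"
    "cpr P (\<lambda>w. Yv w \<le> y \<and> \<not> Dv w) (\<lambda>w. \<not> Zv w) = measure (n00 R) {..y}"
    "measure (n11 R) {..y} + measure (n11 R) {y<..} = (mu R d0) + (mu R d1 - mu R d0)"
    "measure (n00 R) {..y} + measure (n00 R) {y<..} = mu R (\<lambda>r. \<not> d1 r) + (mu R d1 - mu R d0)"
    "finite_measure (n11 R)" "finite_measure (n00 R)"
proof -
  show a: "prodform P B R" unfolding B_def R_def by (rule prodform_P[OF ld ra])
  have z0: "0 < pr P Zv" and z1: "pr P Zv < 1" using ld by (simp_all add: latent_dist_def)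
  note o = obs_mu[OF a z0 z1]
  note p1 = part1[OF a z0 z1 mon h]
  show hpc: "mu R d1 - mu R d0 > 0" using h o by simp
  show "ptype P TA = mu R d0" "ptype P TC = mu R d1 - mu R d0" "ptype P TN = mu R (\<lambda>r. \<not> d1 r)"
    using p1 o by simp_all
  have m11: "measure (n11 R) E = mu R (\<lambda>r. ry True True r \<in> E \<and> d1 r)" if "E \<in> sets borel" for E
    unfolding n11_def by (rule measure_nu[OF a _ _ that]) measurable
  have m00: "measure (n00 R) E = mu R (\<lambda>r. ry False False r \<in> E \<and> \<not> d0 r)" if "E \<in> sets borel" for E
    unfolding n00_def by (rule measure_nu[OF a _ _ that]) measurable
  show "cpr P (\<lambda>w. Yv w \<le> y \<and> Dv w) Zv = measure (n11 R) {..y}"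
    using o(4)[of y] m11[of "{..y}"] by simp
  show "cpr P (\<lambda>w. Yv w \<le> y \<and> \<not> Dv w) (\<lambda>w. \<not> Zv w) = measure (n00 R) {..y}"
    using o(5)[of y] m00[of "{..y}"] by simp
  show f11: "finite_measure (n11 R)" unfolding n11_def by (rule finite_nu[OF a]) measurable
  show f00: "finite_measure (n00 R)" unfolding n00_def by (rule finite_nu[OF a]) measurable
  have "measure (n11 R) UNIV = measure (n11 R) {..y} + measure (n11 R) {y<..}"
    using measure_split_y[OF f11 _ sets.top[of borel], of y] by (simp add: n11_def)
  then show "measure (n11 R) {..y} + measure (n11 R) {y<..} = (mu R d0) + (mu R d1 - mu R d0)"
    using m11[of UNIV] by simp
  have "measure (n00 R) UNIV = measure (n00 R) {..y} + measure (n00 R) {y<..}"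
    using measure_split_y[OF f00 _ sets.top[of borel], of y] by (simp add: n00_def)
  moreover have "mu R (\<lambda>r. \<not> d0 r) = 1 - mu R d0" by (rule mu_compl[OF a]) measurable
  moreover have "mu R (\<lambda>r. \<not> d1 r) = 1 - mu R d1" by (rule mu_compl[OF a]) measurable
  ultimately show "measure (n00 R) {..y} + measure (n00 R) {y<..} = mu R (\<lambda>r. \<not> d1 r) + (mu R d1 - mu R d0)"
    using m00[of UNIV] by simp
qed

lemma latent_Q:
  assumes a: "prodform P B R" and ld: "latent_dist P" and a': "prodform Q B R'"
  shows "latent_dist Q"
  unfolding latent_dist_def using prodform_sets[OF a'] prodform_prob[OF a'] prZ[OF a] prZ[OF a'] ld
  by (simp add: latent_dist_def)

lemma stp_atMost:
  assumes f: "finite_measure \<nu>" and s: "sets \<nu> = sets borel" and "0 \<le> a" "0 \<le> b"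
  shows "measure (stp \<nu> a b y) {..y} = a * measure \<nu> {..y}"
proof -
  have "measure (stp \<nu> a b y) {..y} = a * measure \<nu> ({..y} \<inter> {..y}) + b * measure \<nu> ({..y} \<inter> {y<..})"
    by (rule measure_stp[OF f s _ assms(3,4)]) simp
  moreover have "{..y} \<inter> {y<..} = ({} :: real set)" by auto
  ultimately show ?thesis by simp
qed

lemma stp_UNIV:
  assumes f: "finite_measure \<nu>" and s: "sets \<nu> = sets borel" and "0 \<le> a" "0 \<le> b"
  shows "measure (stp \<nu> a b y) UNIV = a * measure \<nu> {..y} + b * measure \<nu> {y<..}"
  using measure_stp[OF f s _ assms(3,4), of UNIV y] by simp

lemma sharp1:
  assumes ld: "latent_dist P" and ra: "RA P" and mon: "MON P"
    and h: "cpr P Dv Zv - cpr P Dv (\<lambda>w. \<not> Zv w) > 0"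
    and v: "F11a_LB P y \<le> v" "v \<le> F11a_UB P y"
  shows "\<exists>Q. latent_dist Q \<and> RA Q \<and> MON Q \<and> same_obs P Q \<and> Fdzt Q True True TA y = v"
proof -
  define B where "B = distr P (count_space UNIV) fst"
  define R where "R = distr P restM snd"
  note sf0 = setup_facts[OF ld ra mon h, folded B_def R_def]
  note sf = sf0(1-5) sf0(6)[where y=y] sf0(7)[where y=y] sf0(8)[where y=y] sf0(9)[where y=y] sf0(10-11)
  note a = sf(1)
  define pa where "pa = mu R d0"
  define pc where "pc = mu R d1 - mu R d0"
  define pn where "pn = mu R (\<lambda>r. \<not> d1 r)"
  define m where "m = measure (n11 R) {..y}"
  define mR where "mR = measure (n11 R) {y<..}"
  define \<alpha> where "\<alpha> = (if m = 0 then 0 else pa * v / m)"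
  define \<beta> where "\<beta> = (if mR = 0 then 0 else pa * (1 - v) / mR)"
  define \<gamma> where "\<gamma> = pn / (pn + pc)"
  have pc0: "pc > 0" using sf(2) by (simp add: pc_def)
  have pa0: "pa \<ge> 0" "pn \<ge> 0" by (simp_all add: pa_def pn_def mu_nonneg)
  have lb: "max ((m - pc) / pa) 0 \<le> v" and ub: "v \<le> min (m / pa) 1"
    using v sf(3,4,6) by (simp_all add: F11a_LB_def F11a_UB_def m_def pa_def pc_def)
  have mm: "0 \<le> m" "0 \<le> mR" by (simp_all add: m_def mR_def)
  note al = alg1[OF pa0(1) pc0 mm sf(8)[folded pa_def pc_def m_def mR_def] lb ub, folded \<alpha>_def \<beta>_def]
  note pm = prop_mass[OF pa0(2) pc0, folded \<gamma>_def]
  have s11: "sets (n11 R) = sets borel" and s00: "sets (n00 R) = sets borel" by (simp_all add: n11_def n00_def)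
  have mA: "measure (stp (n11 R) \<alpha> \<beta> y) UNIV = mu R d0"
    using stp_UNIV[OF sf(10) s11 al(1) al(3), of y] al(5) by (simp add: m_def mR_def pa_def)
  have mN: "measure (stp (n00 R) \<gamma> \<gamma> y) UNIV = mu R (\<lambda>r. \<not> d1 r)"
    using stp_UNIV[OF sf(11) s00 pm(1) pm(1), of y] sf(9) pm(3)
    by (simp add: pn_def pc_def distrib_left[symmetric] mult.commute)
  note sg = sharp_gen[OF a sf(2) al(1-4) pm(1,2) pm(1,2) mA mN]
  let ?Q = "B \<Otimes>\<^sub>M RQ R \<alpha> \<beta> y \<gamma> \<gamma> y"
  have "Fdzt ?Q True True TA y = measure (stp (n11 R) \<alpha> \<beta> y) {..y} / mu R d0"
    using Fdzt_mu[OF sg(1)] sg(4,5) by simp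
  also have "\<dots> = v" using stp_atMost[OF sf(10) s11 al(1) al(3)] al(6) by (simp add: m_def pa_def)
  finally show ?thesis using latent_Q[OF a ld sg(1)] prodform_RA[OF sg(1)] sg(2,3) by blast
qed

lemma sharp0:
  assumes ld: "latent_dist P" and ra: "RA P" and mon: "MON P"
    and h: "cpr P Dv Zv - cpr P Dv (\<lambda>w. \<not> Zv w) > 0"
    and v: "F00n_LB P y \<le> v" "v \<le> F00n_UB P y"
  shows "\<exists>Q. latent_dist Q \<and> RA Q \<and> MON Q \<and> same_obs P Q \<and> Fdzt Q False False TN y = v"
proof -
  define B where "B = distr P (count_space UNIV) fst"
  define R where "R = distr P restM snd"
  note sf0 = setup_facts[OF ld ra mon h, folded B_def R_def]
  note sf = sf0(1-5) sf0(6)[where y=y] sf0(7)[where y=y] sf0(8)[where y=y] sf0(9)[where y=y] sf0(10-11)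
  note a = sf(1)
  define pa where "pa = mu R d0"
  define pc where "pc = mu R d1 - mu R d0"
  define pn where "pn = mu R (\<lambda>r. \<not> d1 r)"
  define m where "m = measure (n00 R) {..y}"
  define mR where "mR = measure (n00 R) {y<..}"
  define \<alpha> where "\<alpha> = (if m = 0 then 0 else pn * v / m)"
  define \<beta> where "\<beta> = (if mR = 0 then 0 else pn * (1 - v) / mR)"
  define \<gamma> where "\<gamma> = pa / (pa + pc)"
  have pc0: "pc > 0" using sf(2) by (simp add: pc_def)
  have pa0: "pa \<ge> 0" "pn \<ge> 0" by (simp_all add: pa_def pn_def mu_nonneg)
  have lb: "max ((m - pc) / pn) 0 \<le> v" and ub: "v \<le> min (m / pn) 1"
    using v sf(4,5,7) by (simp_all add: F00n_LB_def F00n_UB_def m_def pn_def pc_def)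
  have mm: "0 \<le> m" "0 \<le> mR" by (simp_all add: m_def mR_def)
  note al = alg1[OF pa0(2) pc0 mm sf(9)[folded pn_def pc_def m_def mR_def] lb ub, folded \<alpha>_def \<beta>_def]
  note pm = prop_mass[OF pa0(1) pc0, folded \<gamma>_def]
  have s11: "sets (n11 R) = sets borel" and s00: "sets (n00 R) = sets borel" by (simp_all add: n11_def n00_def)
  have mN: "measure (stp (n00 R) \<alpha> \<beta> y) UNIV = mu R (\<lambda>r. \<not> d1 r)"
    using stp_UNIV[OF sf(11) s00 al(1) al(3), of y] al(5) by (simp add: m_def mR_def pn_def)
  have mA: "measure (stp (n11 R) \<gamma> \<gamma> y) UNIV = mu R d0"
    using stp_UNIV[OF sf(10) s11 pm(1) pm(1), of y] sf(8) pm(3)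
    by (simp add: pa_def pc_def distrib_left[symmetric] mult.commute)
  note sg = sharp_gen[OF a sf(2) pm(1,2) pm(1,2) al(1-4) mA mN]
  let ?Q = "B \<Otimes>\<^sub>M RQ R \<gamma> \<gamma> y \<alpha> \<beta> y"
  have "Fdzt ?Q False False TN y = measure (stp (n00 R) \<alpha> \<beta> y) {..y} / mu R (\<lambda>r. \<not> d1 r)"
    using Fdzt_mu[OF sg(1)] sg(6,7) by simp
  also have "\<dots> = v" using stp_atMost[OF sf(11) s00 al(1) al(3)] al(6) by (simp add: m_def pn_def)
  finally show ?thesis using latent_Q[OF a ld sg(1)] prodform_RA[OF sg(1)] sg(2,3) by blast
qed

theorem proposition3:
  fixes P :: "latent measure"
  assumes "latent_dist P" and "RA P" and "MON P"
    and "cpr P Dv Zv - cpr P Dv (\<lambda>w. \<not> Zv w) > 0"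
  shows "ptype P TC = cpr P Dv Zv - cpr P Dv (\<lambda>w. \<not> Zv w)
    \<and> ptype P TA = cpr P Dv (\<lambda>w. \<not> Zv w)
    \<and> ptype P TN = cpr P (\<lambda>w. \<not> Dv w) Zv
    \<and> ptype P TDF = 0
    \<and> (\<forall>y. F11a_LB P y \<le> Fdzt P True True TA y \<and> Fdzt P True True TA y \<le> F11a_UB P y)
    \<and> (\<forall>y. F00n_LB P y \<le> Fdzt P False False TN y \<and> Fdzt P False False TN y \<le> F00n_UB P y)
    \<and> (\<forall>y. Fdzt P True True TC y =
          (cpr P (\<lambda>w. Yv w \<le> y \<and> Dv w) Zv - ptype P TA * Fdzt P True True TA y) / ptype P TC)
    \<and> (\<forall>y. Fdzt P False False TC y =
          (cpr P (\<lambda>w. Yv w \<le> y \<and> \<not> Dv w) (\<lambda>w. \<not> Zv w) - ptype P TN * Fdzt P False False TN y)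
            / ptype P TC)
    \<and> (\<forall>y. Fdzt P True False TA y = cpr P (\<lambda>w. Yv w \<le> y) (\<lambda>w. Dv w \<and> \<not> Zv w))
    \<and> (\<forall>y. Fdzt P False True TN y = cpr P (\<lambda>w. Yv w \<le> y) (\<lambda>w. \<not> Dv w \<and> Zv w))
    \<and> (\<forall>y v. F11a_LB P y \<le> v \<and> v \<le> F11a_UB P y \<longrightarrow>
          (\<exists>Q. latent_dist Q \<and> RA Q \<and> MON Q \<and> same_obs P Q \<and> Fdzt Q True True TA y = v))
    \<and> (\<forall>y v. F00n_LB P y \<le> v \<and> v \<le> F00n_UB P y \<longrightarrow>
          (\<exists>Q. latent_dist Q \<and> RA Q \<and> MON Q \<and> same_obs P Q \<and> Fdzt Q False False TN y = v))"
proof -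
  have a: "prodform P (distr P (count_space UNIV) fst) (distr P restM snd)" by (rule prodform_P[OF assms(1,2)])
  have z0: "0 < pr P Zv" and z1: "pr P Zv < 1" using assms(1) by (simp_all add: latent_dist_def)
  note p1 = part1[OF a z0 z1 assms(3,4)]
  have s1: "\<forall>y v. F11a_LB P y \<le> v \<and> v \<le> F11a_UB P y \<longrightarrow>
          (\<exists>Q. latent_dist Q \<and> RA Q \<and> MON Q \<and> same_obs P Q \<and> Fdzt Q True True TA y = v)"
    using sharp1[OF assms] by blast
  have s0: "\<forall>y v. F00n_LB P y \<le> v \<and> v \<le> F00n_UB P y \<longrightarrow>
          (\<exists>Q. latent_dist Q \<and> RA Q \<and> MON Q \<and> same_obs P Q \<and> Fdzt Q False False TN y = v)"
    using sharp0[OF assms] by blast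
  show ?thesis using p1 s1 s0 by blast
qed


end
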